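(* Let $(\Omega,\Sigma,\mu)$ be an admissible measure space. Define maps $k,k'$ on $\mathcal{J}_0(\mu)$ by $kE=(E_0)'$ and $k'E=(E')_0$. Then $(k,k')$ is a Galois connexion between $\mathcal{J}_0=\langle\mathcal{J}_0(\mu),\subset^1\rangle$ and $\mathcal{J}_0^{*}=\langle\mathcal{J}_0(\mu),\vartriangleleft\rangle$ (where $E\vartriangleleft F$ means $F\subset^1E$); explicitly, for all $E,F\in\mathcal{J}_0(\mu)$: (i) $E\subset^1F$ implies $(F_0)'\subset^1(E_0)'$; (ii) $F\subset^1E$ implies $(E')_0\subset^1(F')_0$; (iii) $((E_0)'')_0\subset^1E$; (iv) $F\subset^1((F')_0)'$.
   Context: $L_0(\mu)$: classes of measurable real functions ordered a.e. Admissible measure space: $\mu$ complete; a set whose intersection with every finite-measure measurable set is measurable is itself measurable; $\mu$ semifinite; $\mu$ has the direct sum property. A Banach ideal space (BIS) is a vector subspace $E\subset L_0(\mu)$ with complete norm such that $y\in E$, $|x|\le|y|$ a.e. imply $x\in E$, $\|x\|_E\le\|y\|_E$; maximal width: the only $z\in L_0(\mu)$ with $zy=0$ for all $y\in E$ is $z=0$. $E\subset^1F$: $E\subseteq F$ and $\|x\|_F\le\|x\|_E$ for $x\in E$. Dual $E'$: all $f\in L_0(\mu)$ with $\|f\|_{E'}=\sup\{\int_\Omega fx\,d\mu:\|x\|_E=1\}<\infty$. $E_0$: the elements $x\in E$ with order continuous norm (for every decreasing net $|x|\ge x_i\downarrow0$, $\|x_i\|_E\to0$), with the norm of $E$. A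 foundation in $E$ is an ideal of $E$ of maximal width. $\mathcal{J}_0(\mu)$: BIS $E$ of maximal width such that $E_0$ is a foundation in $E$ and $(E')_0$ is a foundation in $E'$. In the paper's definition, a pair $k:L\to L'$, $k':L'\to L$ of maps between posets is a Galois connexion if both are order preserving, $k'(k(a))<a$ for $a\in L$ and $k(k'(a'))<'a'$ for $a'\in L'$; here $L=\mathcal{J}_0$, $L'=\mathcal{J}_0^*$. *)

theory Defs
  imports "HOL-Analysis.Analysis"
begin

definition complete_ms :: "'a measure \<Rightarrow> bool" where
  "complete_ms M \<longleftrightarrow> (\<forall>A B. B \<in> null_sets M \<longrightarrow> A \<subseteq> B \<longrightarrow> A \<in> sets M)"

definition locally_determined :: "'a measure \<Rightarrow> bool" where
  "locally_determined M \<longleftrightarrow>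
     (\<forall>A. A \<subseteq> space M \<longrightarrow>
        (\<forall>B\<in>sets M. emeasure M B < \<infinity> \<longrightarrow> A \<inter> B \<in> sets M) \<longrightarrow> A \<in> sets M)"

definition semifinite_ms :: "'a measure \<Rightarrow> bool" where
  "semifinite_ms M \<longleftrightarrow>
     (\<forall>A\<in>sets M. emeasure M A = \<infinity> \<longrightarrow>
        (\<exists>B\<in>sets M. B \<subseteq> A \<and> 0 < emeasure M B \<and> emeasure M B < \<infinity>))"

definition direct_sum_property :: "'a measure \<Rightarrow> bool" where
  "direct_sum_property M \<longleftrightarrow>
     (\<exists>P. P \<subseteq> sets M \<and> (\<forall>B\<in>P. emeasure M B < \<infinity>) \<and>
          (\<forall>B\<in>P. \<forall>C\<in>P. B \<noteq> C \<longrightarrow> B \<inter> C = {}) \<and> \<Union>P = space M \<and>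
          (\<forall>A. A \<subseteq> space M \<longrightarrow> (A \<in> sets M \<longleftrightarrow> (\<forall>B\<in>P. A \<inter> B \<in> sets M))) \<and>
          (\<forall>A\<in>sets M. emeasure M A =
              (SUP F\<in>{F. finite F \<and> F \<subseteq> P}. \<Sum>B\<in>F. emeasure M (A \<inter> B))))"

definition admissible :: "'a measure \<Rightarrow> bool" where
  "admissible M \<longleftrightarrow> complete_ms M \<and> locally_determined M \<and> semifinite_ms M \<and>
                     direct_sum_property M"

text \<open>Elements of \<open>L_0(\<mu>)\<close> are represented by measurable real functions; a space is
  a set of such functions (saturated under a.e. equality by the ideal property)
  together with a norm on it.\<close>

record 'a ispace =
  elts :: "('a \<Rightarrow> real) set"
  nrm  :: "('a \<Rightarrow> real) \<Rightarrow> real"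

definition linear_sub :: "'a measure \<Rightarrow> ('a \<Rightarrow> real) set \<Rightarrow> bool" where
  "linear_sub M S \<longleftrightarrow> S \<subseteq> borel_measurable M \<and> (\<lambda>_. 0) \<in> S \<and>
     (\<forall>x\<in>S. \<forall>y\<in>S. (\<lambda>w. x w + y w) \<in> S) \<and> (\<forall>c::real. \<forall>x\<in>S. (\<lambda>w. c * x w) \<in> S)"

definition BIS :: "'a measure \<Rightarrow> 'a ispace \<Rightarrow> bool" where
  "BIS M E \<longleftrightarrow> linear_sub M (elts E) \<and>
     (\<forall>x\<in>elts E. 0 \<le> nrm E x \<and> (nrm E x = 0 \<longleftrightarrow> (AE w in M. x w = 0))) \<and>
     (\<forall>x\<in>elts E. \<forall>y\<in>elts E. nrm E (\<lambda>w. x w + y w) \<le> nrm E x + nrm E y) \<and>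
     (\<forall>c. \<forall>x\<in>elts E. nrm E (\<lambda>w. c * x w) = \<bar>c\<bar> * nrm E x) \<and>
     (\<forall>X. (\<forall>n. X n \<in> elts E) \<longrightarrow>
        (\<forall>e>0. \<exists>N. \<forall>m\<ge>N. \<forall>n\<ge>N. nrm E (\<lambda>w. X m w - X n w) < e) \<longrightarrow>
        (\<exists>x\<in>elts E. (\<lambda>n. nrm E (\<lambda>w. X n w - x w)) \<longlonglongrightarrow> 0)) \<and>
     (\<forall>x y. y \<in> elts E \<longrightarrow> x \<in> borel_measurable M \<longrightarrow> (AE w in M. \<bar>x w\<bar> \<le> \<bar>y w\<bar>) \<longrightarrow>
        x \<in> elts E \<and> nrm E x \<le> nrm E y)"

definition max_width :: "'a measure \<Rightarrow> ('a \<Rightarrow> real) set \<Rightarrow> bool" where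
  "max_width M S \<longleftrightarrow> (\<forall>z\<in>borel_measurable M.
     (\<forall>y\<in>S. AE w in M. z w * y w = 0) \<longrightarrow> (AE w in M. z w = 0))"

definition subset1 :: "'a ispace \<Rightarrow> 'a ispace \<Rightarrow> bool" where
  "subset1 E F \<longleftrightarrow> elts E \<subseteq> elts F \<and> (\<forall>x\<in>elts E. nrm F x \<le> nrm E x)"

definition dual :: "'a measure \<Rightarrow> 'a ispace \<Rightarrow> 'a ispace" where
  "dual M E = \<lparr> elts = {f \<in> borel_measurable M.
        (\<forall>x\<in>elts E. integrable M (\<lambda>w. f w * x w)) \<and>
        bdd_above {integral\<^sup>L M (\<lambda>w. f w * x w) | x. x \<in> elts E \<and> nrm E x \<le> 1}},
      nrm = (\<lambda>f. Sup {integral\<^sup>L M (\<lambda>w. f w * x w) | x. x \<in> elts E \<and> nrm E x \<le> 1}) \<rparr>"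

text \<open>Order continuity of the norm at \<open>x\<close>: a decreasing net \<open>|x| \<ge> x_i \<down> 0\<close> is
  represented by its range, a nonempty downward directed set \<open>D\<close> of functions between
  \<open>0\<close> and \<open>|x|\<close> whose infimum in \<open>L_0\<close> is \<open>0\<close>; norm convergence to 0 becomes: the infimum of the norms over D is 0.\<close>
definition ord_cont_at :: "'a measure \<Rightarrow> 'a ispace \<Rightarrow> ('a \<Rightarrow> real) \<Rightarrow> bool" where
  "ord_cont_at M E x \<longleftrightarrow>
     (\<forall>D. D \<noteq> {} \<longrightarrow> D \<subseteq> borel_measurable M \<longrightarrow>
        (\<forall>d\<in>D. AE w in M. 0 \<le> d w \<and> d w \<le> \<bar>x w\<bar>) \<longrightarrow>
        (\<forall>u\<in>D. \<forall>v\<in>D. \<exists>d\<in>D. AE w in M. d w \<le> u w \<and> d w \<le> v w) \<longrightarrow>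
        (\<forall>z\<in>borel_measurable M. (\<forall>d\<in>D. AE w in M. z w \<le> d w) \<longrightarrow> (AE w in M. z w \<le> 0)) \<longrightarrow>
        (\<forall>e>0. \<exists>d\<in>D. nrm E d < e))"

definition ocpart :: "'a measure \<Rightarrow> 'a ispace \<Rightarrow> 'a ispace" where
  "ocpart M E = \<lparr> elts = {x \<in> elts E. ord_cont_at M E x}, nrm = nrm E \<rparr>"

definition foundation :: "'a measure \<Rightarrow> 'a ispace \<Rightarrow> 'a ispace \<Rightarrow> bool" where
  "foundation M I E \<longleftrightarrow> elts I \<subseteq> elts E \<and> linear_sub M (elts I) \<and>
     (\<forall>x y. y \<in> elts I \<longrightarrow> x \<in> elts E \<longrightarrow> (AE w in M. \<bar>x w\<bar> \<le> \<bar>y w\<bar>) \<longrightarrow> x \<in> elts I) \<and>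
     max_width M (elts I)"

definition J0 :: "'a measure \<Rightarrow> 'a ispace \<Rightarrow> bool" where
  "J0 M E \<longleftrightarrow> BIS M E \<and> max_width M (elts E) \<and>
     foundation M (ocpart M E) E \<and> foundation M (ocpart M (dual M E)) (dual M E)"

end

theory Submission
  imports Defs
begin

definition solid :: "'a measure \<Rightarrow> 'a ispace \<Rightarrow> bool" where
  "solid M A \<longleftrightarrow> (\<forall>x y. y \<in> elts A \<longrightarrow> x \<in> borel_measurable M \<longrightarrow> (AE w in M. \<bar>x w\<bar> \<le> \<bar>y w\<bar>) \<longrightarrow>
        x \<in> elts A \<and> nrm A x \<le> nrm A y)"

definition nideal :: "'a measure \<Rightarrow> 'a ispace \<Rightarrow> bool" where
  "nideal M A \<longleftrightarrow> linear_sub M (elts A) \<and> (\<forall>x\<in>elts A. 0 \<le> nrm A x) \<and>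
     (\<forall>c. \<forall>x\<in>elts A. nrm A (\<lambda>w. c * x w) = \<bar>c\<bar> * nrm A x) \<and> solid M A"

lemma solidD: "solid M A \<Longrightarrow> y \<in> elts A \<Longrightarrow> x \<in> borel_measurable M \<Longrightarrow> (AE w in M. \<bar>x w\<bar> \<le> \<bar>y w\<bar>) \<Longrightarrow>
        x \<in> elts A \<and> nrm A x \<le> nrm A y"
  unfolding solid_def by blast

lemma nidealD:
  assumes "nideal M A"
  shows "elts A \<subseteq> borel_measurable M" "(\<lambda>_. 0) \<in> elts A"
    "\<And>x y. x \<in> elts A \<Longrightarrow> y \<in> elts A \<Longrightarrow> (\<lambda>w. x w + y w) \<in> elts A"
    "\<And>c x. x \<in> elts A \<Longrightarrow> (\<lambda>w. c * x w) \<in> elts A"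
    "\<And>x. x \<in> elts A \<Longrightarrow> 0 \<le> nrm A x"
    "\<And>c x. x \<in> elts A \<Longrightarrow> nrm A (\<lambda>w. c * x w) = \<bar>c\<bar> * nrm A x"
    "solid M A"
  using assms unfolding nideal_def linear_sub_def by blast+

lemma nideal_zero: assumes "nideal M A" shows "nrm A (\<lambda>_. 0) = 0"
proof -
  have "nrm A (\<lambda>w. 0 * (0::real)) = \<bar>0\<bar> * nrm A (\<lambda>_. 0)"
    using nidealD(6)[OF assms, of "\<lambda>_. 0" 0] nidealD(2)[OF assms] by simp
  then show ?thesis by simp
qed

lemma BIS_nideal: "BIS M E \<Longrightarrow> nideal M E"
  unfolding BIS_def nideal_def solid_def by blast

lemma BIS_solid: "BIS M E \<Longrightarrow> solid M E"
  unfolding BIS_def solid_def by blast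

lemma J0_ocpart_nideal:
  assumes "J0 M E" shows "nideal M (ocpart M E)"
proof -
  have B: "BIS M E" and F: "foundation M (ocpart M E) E" using assms unfolding J0_def by auto
  have sub: "elts (ocpart M E) \<subseteq> elts E" by (auto simp: ocpart_def)
  show ?thesis unfolding nideal_def
  proof (intro conjI)
    show "linear_sub M (elts (ocpart M E))" using F unfolding foundation_def by blast
    show "\<forall>x\<in>elts (ocpart M E). 0 \<le> nrm (ocpart M E) x"
      using B sub unfolding BIS_def by (auto simp: ocpart_def)
    show "\<forall>c. \<forall>x\<in>elts (ocpart M E). nrm (ocpart M E) (\<lambda>w. c * x w) = \<bar>c\<bar> * nrm (ocpart M E) x"
      using B sub unfolding BIS_def by (auto simp: ocpart_def)
    show "solid M (ocpart M E)" unfolding solid_def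
    proof (intro allI impI)
      fix x y assume y: "y \<in> elts (ocpart M E)" and x: "x \<in> borel_measurable M"
        and le: "AE w in M. \<bar>x w\<bar> \<le> \<bar>y w\<bar>"
      have "y \<in> elts E" using y sub by auto
      then have xE: "x \<in> elts E" and n: "nrm E x \<le> nrm E y" using B x le unfolding BIS_def by blast+
      have "x \<in> elts (ocpart M E)" using F y xE le unfolding foundation_def by blast
      then show "x \<in> elts (ocpart M E) \<and> nrm (ocpart M E) x \<le> nrm (ocpart M E) y"
        using n by (simp add: ocpart_def)
    qed
  qed
qed

definition dset :: "'a measure \<Rightarrow> 'a ispace \<Rightarrow> ('a \<Rightarrow> real) \<Rightarrow> real set" where
  "dset M A f = {integral\<^sup>L M (\<lambda>w. f w * x w) | x. x \<in> elts A \<and> nrm A x \<le> 1}"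

lemma dual_simps:
  "elts (dual M A) = {f \<in> borel_measurable M. (\<forall>x\<in>elts A. integrable M (\<lambda>w. f w * x w)) \<and> bdd_above (dset M A f)}"
  "nrm (dual M A) f = Sup (dset M A f)"
  by (simp_all add: dual_def dset_def)

lemma dual_memD:
  assumes "f \<in> elts (dual M A)"
  shows "f \<in> borel_measurable M" "\<And>x. x \<in> elts A \<Longrightarrow> integrable M (\<lambda>w. f w * x w)"
    "bdd_above (dset M A f)"
  using assms by (auto simp: dual_simps)

lemma dual_upper:
  assumes "f \<in> elts (dual M A)" "x \<in> elts A" "nrm A x \<le> 1"
  shows "integral\<^sup>L M (\<lambda>w. f w * x w) \<le> nrm (dual M A) f"
  unfolding dual_simps
  by (rule cSup_upper) (use assms dual_memD(3)[OF assms(1)] in \<open>auto simp: dset_def\<close>)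

lemma dual_least:
  assumes "(\<lambda>_. 0) \<in> elts A" "nrm A (\<lambda>_. 0) \<le> 1"
    and "\<And>x. x \<in> elts A \<Longrightarrow> nrm A x \<le> 1 \<Longrightarrow> integral\<^sup>L M (\<lambda>w. f w * x w) \<le> B"
  shows "nrm (dual M A) f \<le> B"
  unfolding dual_simps
  by (rule cSup_least) (use assms in \<open>auto simp: dset_def\<close>)

lemma dual_nonneg:
  assumes "nideal M A" "f \<in> elts (dual M A)"
  shows "0 \<le> nrm (dual M A) f"
  using dual_upper[OF assms(2) nidealD(2)[OF assms(1)]] nideal_zero[OF assms(1)] by simp

lemma holder:
  assumes A: "nideal M A" and f: "f \<in> elts (dual M A)" and x: "x \<in> elts A"
  shows "integral\<^sup>L M (\<lambda>w. f w * x w) \<le> nrm (dual M A) f * nrm A x"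
proof -
  let ?I = "integral\<^sup>L M (\<lambda>w. f w * x w)"
  have sc: "c * ?I \<le> nrm (dual M A) f" if "\<bar>c\<bar> * nrm A x \<le> 1" for c
  proof -
    have "(\<lambda>w. c * x w) \<in> elts A" using nidealD(4)[OF A x] .
    moreover have "nrm A (\<lambda>w. c * x w) \<le> 1" using nidealD(6)[OF A x] that by simp
    ultimately have "integral\<^sup>L M (\<lambda>w. f w * (c * x w)) \<le> nrm (dual M A) f"
      using dual_upper[OF f] by blast
    moreover have "(\<lambda>w. f w * (c * x w)) = (\<lambda>w. c * (f w * x w))" by (auto simp: algebra_simps)
    ultimately show ?thesis by simp
  qed
  show ?thesis
  proof (cases "nrm A x = 0")
    case True
    have "?I \<le> 0"
    proof (rule ccontr)
      assume "\<not> ?I \<le> 0"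
      then have pos: "?I > 0" by simp
      have "((nrm (dual M A) f + 1) / ?I) * ?I \<le> nrm (dual M A) f"
        by (rule sc) (simp add: True)
      then show False using pos by simp
    qed
    then show ?thesis using True by simp
  next
    case False
    then have pos: "nrm A x > 0" using nidealD(5)[OF A x] by simp
    have "(1 / nrm A x) * ?I \<le> nrm (dual M A) f" by (rule sc) (use pos in simp)
    then show ?thesis using pos by (simp add: field_simps)
  qed
qed

lemma dual_least':
  assumes A: "nideal M A"
    and "\<And>x. x \<in> elts A \<Longrightarrow> nrm A x \<le> 1 \<Longrightarrow> integral\<^sup>L M (\<lambda>w. f w * x w) \<le> B"
  shows "nrm (dual M A) f \<le> B"
  by (rule dual_least[OF nidealD(2)[OF A]]) (simp_all add: nideal_zero[OF A] assms(2))

lemma sgn_trick: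
  assumes A: "nideal M A" and x: "x \<in> elts A" and f: "f \<in> borel_measurable M"
  shows "(\<lambda>w. sgn (f w * x w) * x w) \<in> elts A" "nrm A (\<lambda>w. sgn (f w * x w) * x w) \<le> nrm A x"
    "(\<lambda>w. f w * (sgn (f w * x w) * x w)) = (\<lambda>w. \<bar>f w * x w\<bar>)"
proof -
  have xm: "x \<in> borel_measurable M" using nidealD(1)[OF A] x by auto
  have m: "(\<lambda>w. sgn (f w * x w) * x w) \<in> borel_measurable M" using xm f by measurable
  have le: "AE w in M. \<bar>sgn (f w * x w) * x w\<bar> \<le> \<bar>x w\<bar>"
    by (auto simp: abs_mult abs_sgn_eq)
  show "(\<lambda>w. sgn (f w * x w) * x w) \<in> elts A" "nrm A (\<lambda>w. sgn (f w * x w) * x w) \<le> nrm A x"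
    using solidD[OF nidealD(7)[OF A] x m le] by auto
  show "(\<lambda>w. f w * (sgn (f w * x w) * x w)) = (\<lambda>w. \<bar>f w * x w\<bar>)"
  proof (rule ext)
    fix w
    have "f w * (sgn (f w * x w) * x w) = (f w * x w) * sgn (f w * x w)" by (simp add: mult_ac)
    then show "f w * (sgn (f w * x w) * x w) = \<bar>f w * x w\<bar>" by (simp only: abs_sgn[symmetric])
  qed
qed

lemma dual_abs_bound:
  assumes A: "nideal M A" and f: "f \<in> elts (dual M A)" and x: "x \<in> elts A" and n: "nrm A x \<le> 1"
  shows "integral\<^sup>L M (\<lambda>w. \<bar>f w * x w\<bar>) \<le> nrm (dual M A) f"
proof -
  have fm: "f \<in> borel_measurable M" using dual_memD(1)[OF f] .
  note s = sgn_trick[OF A x fm]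
  have "integral\<^sup>L M (\<lambda>w. f w * (sgn (f w * x w) * x w)) \<le> nrm (dual M A) f"
    by (rule dual_upper[OF f s(1)]) (use s(2) n in simp)
  then show ?thesis using s(3) by simp
qed

lemma dual_solid:
  assumes A: "nideal M A"
  shows "solid M (dual M A)"
  unfolding solid_def
proof (intro allI impI)
  fix g f assume f: "f \<in> elts (dual M A)" and g: "g \<in> borel_measurable M"
    and le: "AE w in M. \<bar>g w\<bar> \<le> \<bar>f w\<bar>"
  have fm: "f \<in> borel_measurable M" using dual_memD(1)[OF f] .
  have int: "integrable M (\<lambda>w. g w * x w)" if x: "x \<in> elts A" for x
  proof (rule Bochner_Integration.integrable_bound[OF dual_memD(2)[OF f x]])
    show "(\<lambda>w. g w * x w) \<in> borel_measurable M" using g nidealD(1)[OF A] x by auto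
    show "AE w in M. norm (g w * x w) \<le> norm (f w * x w)"
      using le by eventually_elim (auto simp: abs_mult mult_right_mono)
  qed
  have bnd: "integral\<^sup>L M (\<lambda>w. g w * x w) \<le> nrm (dual M A) f" if x: "x \<in> elts A" "nrm A x \<le> 1" for x
  proof -
    have "integral\<^sup>L M (\<lambda>w. g w * x w) \<le> integral\<^sup>L M (\<lambda>w. \<bar>f w * x w\<bar>)"
    proof (rule integral_mono_AE')
      show "integrable M (\<lambda>w. \<bar>f w * x w\<bar>)" using dual_memD(2)[OF f x(1)] by auto
      show "AE w in M. g w * x w \<le> \<bar>f w * x w\<bar>"
        using le
      proof eventually_elim
        case (elim w)
        have "g w * x w \<le> \<bar>g w * x w\<bar>" by (rule abs_ge_self)
        also have "\<dots> = \<bar>g w\<bar> * \<bar>x w\<bar>" by (rule abs_mult)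
        also have "\<dots> \<le> \<bar>f w\<bar> * \<bar>x w\<bar>" using elim by (rule mult_right_mono) simp
        finally show ?case by (simp add: abs_mult)
      qed
      show "AE w in M. 0 \<le> \<bar>f w * x w\<bar>" by simp
    qed
    also have "\<dots> \<le> nrm (dual M A) f" by (rule dual_abs_bound[OF A f x])
    finally show ?thesis .
  qed
  have gd: "g \<in> elts (dual M A)"
    unfolding dual_simps using g int bnd by (auto simp: dset_def bdd_above_def)
  have "nrm (dual M A) g \<le> nrm (dual M A) f"
    by (rule dual_least'[OF A bnd])
  then show "g \<in> elts (dual M A) \<and> nrm (dual M A) g \<le> nrm (dual M A) f" using gd by simp
qed

lemma dual_add:
  assumes A: "nideal M A" and f: "f \<in> elts (dual M A)" and g: "g \<in> elts (dual M A)"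
  shows "(\<lambda>w. f w + g w) \<in> elts (dual M A)"
    "nrm (dual M A) (\<lambda>w. f w + g w) \<le> nrm (dual M A) f + nrm (dual M A) g"
proof -
  have int: "integrable M (\<lambda>w. (f w + g w) * x w)" if x: "x \<in> elts A" for x
    using dual_memD(2)[OF f x] dual_memD(2)[OF g x] by (simp add: distrib_right)
  have bnd: "integral\<^sup>L M (\<lambda>w. (f w + g w) * x w) \<le> nrm (dual M A) f + nrm (dual M A) g"
    if x: "x \<in> elts A" "nrm A x \<le> 1" for x
  proof -
    have "integral\<^sup>L M (\<lambda>w. (f w + g w) * x w) = integral\<^sup>L M (\<lambda>w. f w * x w) + integral\<^sup>L M (\<lambda>w. g w * x w)"
      using dual_memD(2)[OF f x(1)] dual_memD(2)[OF g x(1)] by (simp add: distrib_right)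
    also have "\<dots> \<le> nrm (dual M A) f + nrm (dual M A) g"
      using dual_upper[OF f x] dual_upper[OF g x] by simp
    finally show ?thesis .
  qed
  show "(\<lambda>w. f w + g w) \<in> elts (dual M A)"
    unfolding dual_simps using dual_memD(1)[OF f] dual_memD(1)[OF g] int bnd
    by (auto simp: dset_def bdd_above_def)
  show "nrm (dual M A) (\<lambda>w. f w + g w) \<le> nrm (dual M A) f + nrm (dual M A) g"
    by (rule dual_least'[OF A bnd])
qed

lemma dual_scale:
  assumes A: "nideal M A" and f: "f \<in> elts (dual M A)"
  shows "(\<lambda>w. c * f w) \<in> elts (dual M A)"
    "nrm (dual M A) (\<lambda>w. c * f w) \<le> \<bar>c\<bar> * nrm (dual M A) f"
proof -
  have int: "integrable M (\<lambda>w. (c * f w) * x w)" if x: "x \<in> elts A" for x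
    using dual_memD(2)[OF f x] by (simp add: mult.assoc)
  have bnd: "integral\<^sup>L M (\<lambda>w. (c * f w) * x w) \<le> \<bar>c\<bar> * nrm (dual M A) f"
    if x: "x \<in> elts A" "nrm A x \<le> 1" for x
  proof -
    have "integral\<^sup>L M (\<lambda>w. (c * f w) * x w) = integral\<^sup>L M (\<lambda>w. f w * (c * x w))"
      by (simp add: algebra_simps)
    also have "\<dots> \<le> nrm (dual M A) f * nrm A (\<lambda>w. c * x w)"
      by (rule holder[OF A f nidealD(4)[OF A x(1)]])
    also have "\<dots> = nrm (dual M A) f * (\<bar>c\<bar> * nrm A x)" using nidealD(6)[OF A x(1)] by simp
    also have "\<dots> \<le> nrm (dual M A) f * \<bar>c\<bar>"
      using dual_nonneg[OF A f] x(2) nidealD(5)[OF A x(1)]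
      by (intro mult_left_mono) (auto intro: mult_left_le)
    finally show ?thesis by (simp add: mult.commute)
  qed
  show "(\<lambda>w. c * f w) \<in> elts (dual M A)"
    unfolding dual_simps using dual_memD(1)[OF f] int bnd
    by (auto simp: dset_def bdd_above_def)
  show "nrm (dual M A) (\<lambda>w. c * f w) \<le> \<bar>c\<bar> * nrm (dual M A) f"
    by (rule dual_least'[OF A bnd])
qed

lemma subset1_trans: "subset1 A B \<Longrightarrow> subset1 B C \<Longrightarrow> subset1 A C"
  unfolding subset1_def by (meson order_trans subsetD)

lemma dual_antitone:
  assumes AB: "subset1 A B" and z: "(\<lambda>_. 0) \<in> elts A" "nrm A (\<lambda>_. 0) \<le> 1"
  shows "subset1 (dual M B) (dual M A)"
  unfolding subset1_def
proof (intro conjI ballI subsetI)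
  have AB1: "elts A \<subseteq> elts B" and AB2: "\<And>x. x \<in> elts A \<Longrightarrow> nrm B x \<le> nrm A x"
    using AB unfolding subset1_def by auto
  have sub: "dset M A f \<subseteq> dset M B f" for f
    unfolding dset_def using AB1 AB2 by (force intro: order_trans)
  have ne: "dset M A f \<noteq> {}" for f using z unfolding dset_def by blast
  fix f assume f: "f \<in> elts (dual M B)"
  show "f \<in> elts (dual M A)"
  proof -
    have "bdd_above (dset M A f)" using dual_memD(3)[OF f] sub[of f] by (rule bdd_above_mono)
    then show ?thesis using dual_memD(1,2)[OF f] AB1 unfolding dual_simps by blast
  qed
  show "nrm (dual M A) f \<le> nrm (dual M B) f"
    unfolding dual_simps by (rule cSup_subset_mono[OF ne dual_memD(3)[OF f] sub])
qed

lemma ord_cont_atD: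
  assumes "ord_cont_at M E x" "D \<noteq> {}" "D \<subseteq> borel_measurable M"
    "\<forall>d\<in>D. AE w in M. 0 \<le> d w \<and> d w \<le> \<bar>x w\<bar>"
    "\<forall>u\<in>D. \<forall>v\<in>D. \<exists>d\<in>D. AE w in M. d w \<le> u w \<and> d w \<le> v w"
    "\<forall>z\<in>borel_measurable M. (\<forall>d\<in>D. AE w in M. z w \<le> d w) \<longrightarrow> (AE w in M. z w \<le> 0)"
    "0 < e"
  shows "\<exists>d\<in>D. nrm E d < e"
proof -
  have "D \<noteq> {} \<longrightarrow> D \<subseteq> borel_measurable M \<longrightarrow>
        (\<forall>d\<in>D. AE w in M. 0 \<le> d w \<and> d w \<le> \<bar>x w\<bar>) \<longrightarrow>
        (\<forall>u\<in>D. \<forall>v\<in>D. \<exists>d\<in>D. AE w in M. d w \<le> u w \<and> d w \<le> v w) \<longrightarrow>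
        (\<forall>z\<in>borel_measurable M. (\<forall>d\<in>D. AE w in M. z w \<le> d w) \<longrightarrow> (AE w in M. z w \<le> 0)) \<longrightarrow>
        (\<forall>e>0. \<exists>d\<in>D. nrm E d < e)"
    using assms(1) unfolding ord_cont_at_def by (rule spec)
  note H = mp[OF mp[OF mp[OF mp[OF mp[OF this assms(2)] assms(3)] assms(4)] assms(5)] assms(6)]
  then have "\<forall>e>0. \<exists>d\<in>D. nrm E d < e" .
  then show ?thesis using assms(7) by blast
qed

lemma ocpart_mono:
  assumes S: "solid M A" and AB: "subset1 A B"
  shows "subset1 (ocpart M A) (ocpart M B)"
  unfolding subset1_def
proof (intro conjI ballI subsetI)
  have AB1: "elts A \<subseteq> elts B" and AB2: "\<And>x. x \<in> elts A \<Longrightarrow> nrm B x \<le> nrm A x"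
    using AB unfolding subset1_def by auto
  fix x assume x: "x \<in> elts (ocpart M A)"
  then have xA: "x \<in> elts A" and oc: "ord_cont_at M A x" by (auto simp: ocpart_def)
  have "ord_cont_at M B x" unfolding ord_cont_at_def
  proof (intro allI impI)
    fix D :: "('a \<Rightarrow> real) set" and e :: real
    assume D: "D \<noteq> {}" "D \<subseteq> borel_measurable M" "\<forall>d\<in>D. AE w in M. 0 \<le> d w \<and> d w \<le> \<bar>x w\<bar>"
      "\<forall>u\<in>D. \<forall>v\<in>D. \<exists>d\<in>D. AE w in M. d w \<le> u w \<and> d w \<le> v w"
      "\<forall>z\<in>borel_measurable M. (\<forall>d\<in>D. AE w in M. z w \<le> d w) \<longrightarrow> (AE w in M. z w \<le> 0)"
      and e: "0 < e"
    obtain d where d: "d \<in> D" "nrm A d < e" using ord_cont_atD[OF oc D e] by blast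
    have dm: "d \<in> borel_measurable M" using D(2) d(1) by blast
    from D(3) d(1) have "AE w in M. 0 \<le> d w \<and> d w \<le> \<bar>x w\<bar>" by blast
    then have "AE w in M. \<bar>d w\<bar> \<le> \<bar>x w\<bar>" by eventually_elim auto
    then have "d \<in> elts A" using solidD[OF S xA dm] by blast
    then have "nrm B d < e" using d(2) AB2[of d] by linarith
    then show "\<exists>d\<in>D. nrm B d < e" using d(1) by blast
  qed
  then show "x \<in> elts (ocpart M B)" using xA AB1 by (auto simp: ocpart_def)
  show "nrm (ocpart M B) x \<le> nrm (ocpart M A) x" using AB2[OF xA] by (simp add: ocpart_def)
qed

lemma dual_zero:
  assumes A: "nideal M A"
  shows "(\<lambda>_. 0) \<in> elts (dual M A)" "nrm (dual M A) (\<lambda>_. 0) = 0"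
proof -
  have ds: "dset M A (\<lambda>_. 0) = {0}"
    using nidealD(2)[OF A] nideal_zero[OF A] unfolding dset_def by force
  show "(\<lambda>_. 0) \<in> elts (dual M A)" by (auto simp: dual_simps ds)
  show "nrm (dual M A) (\<lambda>_. 0) = 0" by (simp add: dual_simps ds)
qed

lemma into_bidual:
  assumes A: "nideal M A"
  shows "subset1 A (dual M (dual M A))"
  unfolding subset1_def
proof (intro conjI ballI subsetI)
  note z = dual_zero[OF A]
  fix x assume x: "x \<in> elts A"
  have xm: "x \<in> borel_measurable M" using nidealD(1)[OF A] x by auto
  have int: "integrable M (\<lambda>w. x w * f w)" if f: "f \<in> elts (dual M A)" for f
    using dual_memD(2)[OF f x] by (simp add: mult.commute)
  have bnd: "integral\<^sup>L M (\<lambda>w. x w * f w) \<le> nrm A x" if f: "f \<in> elts (dual M A)" "nrm (dual M A) f \<le> 1" for f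
  proof -
    have "integral\<^sup>L M (\<lambda>w. x w * f w) = integral\<^sup>L M (\<lambda>w. f w * x w)" by (simp add: mult.commute)
    also have "\<dots> \<le> nrm (dual M A) f * nrm A x" by (rule holder[OF A f(1) x])
    also have "\<dots> \<le> 1 * nrm A x" using f(2) nidealD(5)[OF A x] by (intro mult_right_mono) auto
    finally show ?thesis by simp
  qed
  have "bdd_above (dset M (dual M A) x)"
    unfolding bdd_above_def dset_def using bnd by blast
  then show "x \<in> elts (dual M (dual M A))"
    unfolding dual_simps(1)[of M "dual M A"] using xm int by blast
  show "nrm (dual M (dual M A)) x \<le> nrm A x"
    by (rule dual_least[OF z(1)]) (simp_all add: z(2) bnd)
qed

definition lsp :: "('a \<Rightarrow> real) set \<Rightarrow> bool" where
  "lsp V \<longleftrightarrow> (\<lambda>_. 0) \<in> V \<and> (\<forall>x\<in>V. \<forall>y\<in>V. (\<lambda>w. x w + y w) \<in> V) \<and> (\<forall>c. \<forall>x\<in>V. (\<lambda>w. c * x w) \<in> V)"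

definition sublin :: "('a \<Rightarrow> real) set \<Rightarrow> (('a \<Rightarrow> real) \<Rightarrow> real) \<Rightarrow> bool" where
  "sublin V q \<longleftrightarrow> (\<forall>x\<in>V. \<forall>y\<in>V. q (\<lambda>w. x w + y w) \<le> q x + q y) \<and>
     (\<forall>c\<ge>0. \<forall>x\<in>V. q (\<lambda>w. c * x w) = c * q x)"

lemma lspD:
  assumes "lsp V"
  shows "(\<lambda>_. 0) \<in> V" "\<And>x y. x \<in> V \<Longrightarrow> y \<in> V \<Longrightarrow> (\<lambda>w. x w + y w) \<in> V"
    "\<And>c x. x \<in> V \<Longrightarrow> (\<lambda>w. c * x w) \<in> V"
  using assms unfolding lsp_def by blast+

lemma lsp_comb: "lsp V \<Longrightarrow> x \<in> V \<Longrightarrow> y \<in> V \<Longrightarrow> (\<lambda>w. x w + t * y w) \<in> V"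
  using lspD[of V] by blast

lemma sublinD:
  assumes "sublin V q"
  shows "\<And>x y. x \<in> V \<Longrightarrow> y \<in> V \<Longrightarrow> q (\<lambda>w. x w + y w) \<le> q x + q y"
    "\<And>c x. 0 \<le> c \<Longrightarrow> x \<in> V \<Longrightarrow> q (\<lambda>w. c * x w) = c * q x"
  using assms unfolding sublin_def by blast+

lemma sublin_zero:
  assumes V: "lsp V" and q: "sublin V q" shows "q (\<lambda>_. 0) = 0"
  using sublinD(2)[OF q, of 0 "\<lambda>_. 0"] lspD(1)[OF V] by simp

lemma sublin_lower:
  assumes V: "lsp V" and q: "sublin V q" and x: "x \<in> V" and y: "y \<in> V"
  shows "q y - q (\<lambda>w. y w - x w) \<le> q x"
proof -
  have "q (\<lambda>w. (y w - x w) + x w) \<le> q (\<lambda>w. y w - x w) + q x"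
    using sublinD(1)[OF q, of "\<lambda>w. y w - x w" x] lsp_comb[OF V y x, of "-1"] x by simp
  then show ?thesis by simp
qed

lemma INF_cmult:
  fixes f :: "'b \<Rightarrow> real"
  assumes "0 < c" "C \<noteq> {}" "bdd_below (f ` C)"
  shows "(INF i\<in>C. c * f i) = c * (INF i\<in>C. f i)"
proof (rule antisym)
  have b2: "bdd_below ((\<lambda>i. c * f i) ` C)"
  proof -
    obtain m where "\<And>i. i \<in> C \<Longrightarrow> m \<le> f i" using assms(3) by (auto simp: bdd_below_def)
    then have "\<And>i. i \<in> C \<Longrightarrow> c * m \<le> c * f i" using assms(1) by simp
    then show ?thesis by (auto simp: bdd_below_def)
  qed
  show "c * (INF i\<in>C. f i) \<le> (INF i\<in>C. c * f i)"
    by (rule cINF_greatest[OF assms(2)]) (use assms in \<open>auto intro: cINF_lower\<close>)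
  have "(INF i\<in>C. c * f i) / c \<le> (INF i\<in>C. f i)"
  proof (rule cINF_greatest[OF assms(2)])
    fix i assume "i \<in> C"
    then have "(INF i\<in>C. c * f i) \<le> c * f i" by (rule cINF_lower[OF b2])
    then show "(INF i\<in>C. c * f i) / c \<le> f i" using assms(1) by (simp add: divide_le_eq mult.commute)
  qed
  then show "(INF i\<in>C. c * f i) \<le> c * (INF i\<in>C. f i)" using assms(1) by (simp add: divide_le_eq mult.commute)
qed

definition shift :: "('a \<Rightarrow> real) set \<Rightarrow> (('a \<Rightarrow> real) \<Rightarrow> real) \<Rightarrow> ('a \<Rightarrow> real) \<Rightarrow> ('a \<Rightarrow> real) \<Rightarrow> real" where
  "shift V q a z = (if z \<in> V then (INF t\<in>{0..}. q (\<lambda>w. z w + t * a w) - t * q a) else 0)"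

lemma shift_props:
  assumes V: "lsp V" and q: "sublin V q" and a: "a \<in> V"
  shows "\<And>z. z \<in> V \<Longrightarrow> shift V q a z \<le> q z"
    "\<And>z. z \<in> V \<Longrightarrow> shift V q a z \<le> q (\<lambda>w. z w + a w) - q a"
    "\<And>z. z \<notin> V \<Longrightarrow> shift V q a z = 0"
    "sublin V (shift V q a)"
proof -
  let ?g = "\<lambda>z t. q (\<lambda>w. z w + t * a w) - t * q a"
  have bb: "bdd_below (?g z ` {0..})" if z: "z \<in> V" for z
  proof -
    have "- q (\<lambda>w. -1 * z w) \<le> ?g z t" if t: "t \<ge> 0" for t
    proof -
      have "q (\<lambda>w. (z w + t * a w) + (-1 * z w)) \<le> q (\<lambda>w. z w + t * a w) + q (\<lambda>w. -1 * z w)"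
        by (rule sublinD(1)[OF q lsp_comb[OF V z a] lspD(3)[OF V z]])
      moreover have "(\<lambda>w. (z w + t * a w) + (-1 * z w)) = (\<lambda>w. t * a w)" by auto
      moreover have "q (\<lambda>w. t * a w) = t * q a" using sublinD(2)[OF q t a] .
      ultimately show ?thesis by simp
    qed
    then show ?thesis unfolding bdd_below_def by blast
  qed
  have sv: "z \<in> V \<Longrightarrow> shift V q a z = (INF t\<in>{0..}. ?g z t)" for z by (simp add: shift_def)
  have low: "z \<in> V \<Longrightarrow> 0 \<le> t \<Longrightarrow> shift V q a z \<le> ?g z t" for z t
    unfolding sv by (rule cINF_lower[OF bb]) auto
  show "shift V q a z \<le> q z" if "z \<in> V" for z
    using low[OF that, of 0] by simp
  show "shift V q a z \<le> q (\<lambda>w. z w + a w) - q a" if "z \<in> V" for z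
    using low[OF that, of 1] by simp
  show "\<And>z. z \<notin> V \<Longrightarrow> shift V q a z = 0" by (simp add: shift_def)
  show "sublin V (shift V q a)" unfolding sublin_def
  proof (intro conjI ballI allI impI)
    fix x y assume x: "x \<in> V" and y: "y \<in> V"
    have xy: "(\<lambda>w. x w + y w) \<in> V" using lspD(2)[OF V x y] .
    have "shift V q a (\<lambda>w. x w + y w) - ?g y t \<le> shift V q a x" if t: "t \<ge> 0" for t
    proof -
      have "shift V q a (\<lambda>w. x w + y w) - ?g y t \<le> ?g x s" if s: "s \<ge> 0" for s
      proof -
        have "shift V q a (\<lambda>w. x w + y w) \<le> ?g (\<lambda>w. x w + y w) (s + t)"
          using low[OF xy] s t by simp
        also have "q (\<lambda>w. (x w + y w) + (s + t) * a w) \<le> q (\<lambda>w. x w + s * a w) + q (\<lambda>w. y w + t * a w)"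
        proof -
          have "(\<lambda>w. (x w + y w) + (s + t) * a w) = (\<lambda>w. (x w + s * a w) + (y w + t * a w))"
            by (auto simp: algebra_simps)
          then show ?thesis using sublinD(1)[OF q lsp_comb[OF V x a] lsp_comb[OF V y a]] by simp
        qed
        then have "?g (\<lambda>w. x w + y w) (s + t) \<le> ?g x s + ?g y t" by (simp add: algebra_simps)
        finally show ?thesis by simp
      qed
      then show ?thesis unfolding sv[OF x] by (intro cINF_greatest) auto
    qed
    then have "shift V q a (\<lambda>w. x w + y w) - shift V q a x \<le> ?g y t" if "t \<ge> 0" for t
      using that by force
    then have "shift V q a (\<lambda>w. x w + y w) - shift V q a x \<le> shift V q a y"
      unfolding sv[OF y] by (intro cINF_greatest) auto
    then show "shift V q a (\<lambda>w. x w + y w) \<le> shift V q a x + shift V q a y" by simp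
  next
    fix c :: real and x assume c: "0 \<le> c" and x: "x \<in> V"
    have cx: "(\<lambda>w. c * x w) \<in> V" using lspD(3)[OF V x] .
    show "shift V q a (\<lambda>w. c * x w) = c * shift V q a x"
    proof (cases "c = 0")
      case True
      have Z: "?g (\<lambda>w. c * x w) t = 0" if "t \<ge> 0" for t
      proof -
        have "(\<lambda>w. c * x w + t * a w) = (\<lambda>w. t * a w)" using True by simp
        then show ?thesis using sublinD(2)[OF q that a] by simp
      qed
      have "?g (\<lambda>w. c * x w) ` {0..} = {0}"
      proof (intro set_eqI iffI)
        fix r assume "r \<in> ?g (\<lambda>w. c * x w) ` {0..}"
        then show "r \<in> {0}" using Z by auto
      next
        fix r :: real assume "r \<in> {0}"
        then have "r = ?g (\<lambda>w. c * x w) 0" using Z[of 0] by simp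
        moreover have "(0::real) \<in> {0..}" by simp
        ultimately show "r \<in> ?g (\<lambda>w. c * x w) ` {0..}" by (rule image_eqI)
      qed
      then have "shift V q a (\<lambda>w. c * x w) = 0" unfolding sv[OF cx] by simp
      then show ?thesis using True by simp
    next
      case False
      then have cp: "c > 0" using c by simp
      have img: "(\<lambda>s. c * s) ` {0..} = {0::real..}"
      proof (intro set_eqI iffI)
        fix t :: real assume "t \<in> {0..}"
        then have "t = c * (t / c)" "t / c \<in> {0..}" using cp by auto
        then show "t \<in> (\<lambda>s. c * s) ` {0..}" by blast
      qed (use cp in auto)
      have "shift V q a (\<lambda>w. c * x w) = (INF t\<in>(\<lambda>s. c * s) ` {0..}. ?g (\<lambda>w. c * x w) t)"
        unfolding sv[OF cx] img ..
      also have "\<dots> = (INF s\<in>{0..}. ?g (\<lambda>w. c * x w) (c * s))"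
        by (simp add: image_image)
      also have "\<dots> = (INF s\<in>{0..}. c * ?g x s)"
      proof (intro INF_cong refl)
        fix s :: real assume s: "s \<in> {0..}"
        have e: "(\<lambda>w. c * x w + (c * s) * a w) = (\<lambda>w. c * (x w + s * a w))" by (auto simp: algebra_simps)
        have h: "q (\<lambda>w. c * (x w + s * a w)) = c * q (\<lambda>w. x w + s * a w)"
          using sublinD(2)[OF q c lsp_comb[OF V x a, of s]] .
        have "?g (\<lambda>w. c * x w) (c * s) = q (\<lambda>w. c * (x w + s * a w)) - (c * s) * q a"
          by (simp only: e)
        also have "\<dots> = c * ?g x s" unfolding h by (simp add: algebra_simps)
        finally show "?g (\<lambda>w. c * x w) (c * s) = c * ?g x s" .
      qed
      also have "\<dots> = c * shift V q a x"
        unfolding sv[OF x] by (rule INF_cmult[OF cp _ bb[OF x]]) auto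
      finally show ?thesis .
    qed
  qed
qed

lemma sublin_neg_bound:
  assumes V: "lsp V" and q: "sublin V q" and x: "x \<in> V"
  shows "- q (\<lambda>w. -1 * x w) \<le> q x"
proof -
  have "q (\<lambda>w. x w + -1 * x w) \<le> q x + q (\<lambda>w. -1 * x w)"
    by (rule sublinD(1)[OF q x lspD(3)[OF V x]])
  moreover have "(\<lambda>w. x w + -1 * x w) = (\<lambda>_. 0)" by auto
  ultimately show ?thesis using sublin_zero[OF V q] by simp
qed

lemma minimal_linear:
  assumes V: "lsp V" and p0: "sublin V p0" and out: "\<And>x. x \<notin> V \<Longrightarrow> p0 x = 0"
  shows "\<exists>m. sublin V m \<and> (\<forall>x\<in>V. m x \<le> p0 x) \<and>
            (\<forall>x\<in>V. \<forall>a\<in>V. m (\<lambda>w. x w + a w) = m x + m a)"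
proof -
  define A where "A = {q. sublin V q \<and> (\<forall>x\<in>V. q x \<le> p0 x) \<and> (\<forall>x. x \<notin> V \<longrightarrow> q x = 0)}"
  define P where "P = (\<lambda>q1 q2. \<forall>x\<in>V. q2 x \<le> (q1 x :: real))"
  have po: "partial_order_on A (relation_of P A)"
  proof (rule partial_order_on_relation_ofI)
    show "\<And>a. a \<in> A \<Longrightarrow> P a a" by (simp add: P_def)
    show "\<And>a b c. a \<in> A \<Longrightarrow> b \<in> A \<Longrightarrow> c \<in> A \<Longrightarrow> P a b \<Longrightarrow> P b c \<Longrightarrow> P a c"
      unfolding P_def by (meson order_trans)
    show "a = b" if "a \<in> A" "b \<in> A" "P a b" "P b a" for a b
    proof (rule ext)
      fix x show "a x = b x"
        using that by (cases "x \<in> V") (auto simp: A_def P_def intro: antisym)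
    qed
  qed
  have p0A: "p0 \<in> A" using p0 out by (simp add: A_def)
  have ch: "\<exists>u\<in>A. \<forall>a\<in>C. P a u" if C: "C \<in> Chains (relation_of P A)" for C
  proof (cases "C = {}")
    case True then show ?thesis using p0A by blast
  next
    case ne: False
    have CA: "C \<subseteq> A" using Chains_relation_of[OF C] .
    have cmp: "P a b \<or> P b a" if "a \<in> C" "b \<in> C" for a b
      using C that unfolding Chains_def relation_of_def by blast
    have qA: "sublin V q" "\<And>x. x \<in> V \<Longrightarrow> q x \<le> p0 x" if "q \<in> C" for q
      using CA that by (auto simp: A_def)
    define u where "u = (\<lambda>x. if x \<in> V then (INF q\<in>C. q x) else 0)"
    have bb: "bdd_below ((\<lambda>q. q x) ` C)" if x: "x \<in> V" for x
    proof -
      have "- p0 (\<lambda>w. -1 * x w) \<le> q x" if q: "q \<in> C" for q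
      proof -
        have a: "- q (\<lambda>w. -1 * x w) \<le> q x" by (rule sublin_neg_bound[OF V qA(1)[OF q] x])
        have b: "q (\<lambda>w. -1 * x w) \<le> p0 (\<lambda>w. -1 * x w)" by (rule qA(2)[OF q lspD(3)[OF V x]])
        from a b show ?thesis by linarith
      qed
      then show ?thesis unfolding bdd_below_def by blast
    qed
    have ule: "u x \<le> q x" if "x \<in> V" "q \<in> C" for x q
      using cINF_lower[OF bb[OF that(1)] that(2)] that(1) by (simp add: u_def)
    have uge: "m \<le> u x" if "x \<in> V" "\<And>q. q \<in> C \<Longrightarrow> m \<le> q x" for x m
      using cINF_greatest[OF ne, of m "\<lambda>q. q x"] that by (simp add: u_def)
    have usub: "sublin V u" unfolding sublin_def
    proof (intro conjI ballI allI impI)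
      fix x y assume x: "x \<in> V" and y: "y \<in> V"
      have xy: "(\<lambda>w. x w + y w) \<in> V" using lspD(2)[OF V x y] .
      have key: "u (\<lambda>w. x w + y w) \<le> q1 x + q2 y" if q1: "q1 \<in> C" and q2: "q2 \<in> C" for q1 q2
      proof (cases "P q1 q2")
        case True
        have "u (\<lambda>w. x w + y w) \<le> q2 (\<lambda>w. x w + y w)" by (rule ule[OF xy q2])
        also have "\<dots> \<le> q2 x + q2 y" by (rule sublinD(1)[OF qA(1)[OF q2] x y])
        also have "\<dots> \<le> q1 x + q2 y" using True x by (simp add: P_def)
        finally show ?thesis .
      next
        case False
        then have "P q2 q1" using cmp[OF q1 q2] by blast
        have "u (\<lambda>w. x w + y w) \<le> q1 (\<lambda>w. x w + y w)" by (rule ule[OF xy q1])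
        also have "\<dots> \<le> q1 x + q1 y" by (rule sublinD(1)[OF qA(1)[OF q1] x y])
        also have "\<dots> \<le> q1 x + q2 y" using \<open>P q2 q1\<close> y by (simp add: P_def)
        finally show ?thesis .
      qed
      have "u (\<lambda>w. x w + y w) - q2 y \<le> u x" if q2: "q2 \<in> C" for q2
        using key[OF _ q2] by (intro uge[OF x]) (simp add: algebra_simps)
      then have "u (\<lambda>w. x w + y w) - u x \<le> u y"
        by (intro uge[OF y]) (simp add: algebra_simps)
      then show "u (\<lambda>w. x w + y w) \<le> u x + u y" by simp
    next
      fix c :: real and x assume c: "0 \<le> c" and x: "x \<in> V"
      have cx: "(\<lambda>w. c * x w) \<in> V" using lspD(3)[OF V x] .
      have "u (\<lambda>w. c * x w) = (INF q\<in>C. q (\<lambda>w. c * x w))" using cx by (simp add: u_def)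
      also have "\<dots> = (INF q\<in>C. c * q x)"
        by (rule arg_cong[where f=Inf], rule image_cong[OF refl]) (use sublinD(2)[OF qA(1) c x] in blast)
      also have "\<dots> = c * u x"
      proof (cases "c = 0")
        case True
        have "(\<lambda>q. c * q x) ` C = {0}" using ne True by auto
        then show ?thesis using True by simp
      next
        case False
        then show ?thesis using INF_cmult[OF _ ne bb[OF x], of c] c x by (simp add: u_def)
      qed
      finally show "u (\<lambda>w. c * x w) = c * u x" .
    qed
    obtain q0 where q0: "q0 \<in> C" using ne by blast
    have "u \<in> A" unfolding A_def
    proof (intro CollectI conjI allI impI ballI usub)
      fix x assume x: "x \<in> V"
      show "u x \<le> p0 x" using ule[OF x q0] qA(2)[OF q0 x] by simp
    next
      fix x assume "x \<notin> V" then show "u x = 0" by (simp add: u_def)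
    qed
    moreover have "\<forall>a\<in>C. P a u" using ule by (simp add: P_def)
    ultimately show ?thesis by blast
  qed
  obtain m where mA: "m \<in> A" and mmin: "\<And>a. a \<in> A \<Longrightarrow> P m a \<Longrightarrow> a = m"
    using predicate_Zorn[OF po ch] by blast
  have msub: "sublin V m" and mle: "\<And>x. x \<in> V \<Longrightarrow> m x \<le> p0 x" and mout: "\<And>x. x \<notin> V \<Longrightarrow> m x = 0"
    using mA by (auto simp: A_def)
  have add: "m (\<lambda>w. x w + a w) = m x + m a" if x: "x \<in> V" and a: "a \<in> V" for x a
  proof -
    note sp = shift_props[OF V msub a]
    have "shift V m a x \<le> p0 x" if "x \<in> V" for x using sp(1)[OF that] mle[OF that] by linarith
    then have "shift V m a \<in> A" unfolding A_def using sp(3,4) by blast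
    moreover have "P m (shift V m a)" using sp(1) by (simp add: P_def)
    ultimately have eq: "shift V m a = m" by (rule mmin)
    have "m x \<le> m (\<lambda>w. x w + a w) - m a" using sp(2)[OF x] unfolding eq .
    then show ?thesis using sublinD(1)[OF msub x a] by simp
  qed
  show ?thesis using msub mle add by blast
qed

theorem HB:
  assumes V: "lsp V" and p: "sublin V p" and y: "y \<in> V"
  shows "\<exists>\<phi>. (\<forall>x\<in>V. \<forall>z\<in>V. \<phi> (\<lambda>w. x w + z w) = \<phi> x + \<phi> z) \<and>
             (\<forall>c. \<forall>x\<in>V. \<phi> (\<lambda>w. c * x w) = c * \<phi> x) \<and> (\<forall>x\<in>V. \<phi> x \<le> p x) \<and> \<phi> y = p y"
proof -
  note sp = shift_props[OF V p y]
  obtain m where msub: "sublin V m" and mle: "\<And>x. x \<in> V \<Longrightarrow> m x \<le> shift V p y x"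
    and add: "\<And>x a. x \<in> V \<Longrightarrow> a \<in> V \<Longrightarrow> m (\<lambda>w. x w + a w) = m x + m a"
    using minimal_linear[OF V sp(4) sp(3)] by blast
  have m0: "m (\<lambda>_. 0) = 0" by (rule sublin_zero[OF V msub])
  have neg: "m (\<lambda>w. -1 * x w) = - m x" if x: "x \<in> V" for x
  proof -
    have "m (\<lambda>w. x w + -1 * x w) = m x + m (\<lambda>w. -1 * x w)" by (rule add[OF x lspD(3)[OF V x]])
    moreover have "(\<lambda>w. x w + -1 * x w) = (\<lambda>_. 0)" by auto
    ultimately show ?thesis using m0 by simp
  qed
  have sc: "m (\<lambda>w. c * x w) = c * m x" if x: "x \<in> V" for c x
  proof (cases "c \<ge> 0")
    case True then show ?thesis using sublinD(2)[OF msub True x] by simp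
  next
    case False
    have eq: "(\<lambda>w. c * x w) = (\<lambda>w. (-c) * (-1 * x w))" by auto
    have h: "m (\<lambda>w. (-c) * (-1 * x w)) = (-c) * m (\<lambda>w. -1 * x w)"
      by (rule sublinD(2)[OF msub _ lspD(3)[OF V x]]) (use False in simp)
    have "m (\<lambda>w. c * x w) = (-c) * m (\<lambda>w. -1 * x w)"
      unfolding eq by (rule h)
    then show ?thesis using neg[OF x] by simp
  qed
  have le: "m x \<le> p x" if "x \<in> V" for x using mle[OF that] sp(1)[OF that] by simp
  have "m (\<lambda>w. -1 * y w) \<le> p (\<lambda>w. -1 * y w + y w) - p y"
    using mle[OF lspD(3)[OF V y, of "-1"]] sp(2)[OF lspD(3)[OF V y, of "-1"]] by linarith
  moreover have "(\<lambda>w. -1 * y w + y w) = (\<lambda>_. 0)" by auto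
  ultimately have "- m y \<le> - p y" using neg[OF y] sublin_zero[OF V p] by simp
  then have "m y = p y" using le[OF y] by simp
  then show ?thesis using add sc le by blast
qed

lemma BIS_facts:
  assumes B: "BIS M E"
  shows "\<And>x. x \<in> elts E \<Longrightarrow> nrm E x = 0 \<longleftrightarrow> (AE w in M. x w = 0)"
    "\<And>x y. x \<in> elts E \<Longrightarrow> y \<in> elts E \<Longrightarrow> nrm E (\<lambda>w. x w + y w) \<le> nrm E x + nrm E y"
  using B unfolding BIS_def by blast+

locale K0 =
  fixes M :: "'a measure" and E :: "'a ispace" and y :: "'a \<Rightarrow> real"
  assumes adm: "admissible M" and J0: "J0 M E" and y: "y \<in> elts (ocpart M E)" and ynn: "\<And>w. 0 \<le> y w"
begin

abbreviation "V \<equiv> elts (ocpart M E)"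

lemma B: "BIS M E" using J0 by (simp add: J0_def)
lemma NE: "nideal M E" using BIS_nideal[OF B] .
lemma N0: "nideal M (ocpart M E)" using J0_ocpart_nideal[OF J0] .
lemma VE: "V \<subseteq> elts E" by (auto simp: ocpart_def)
lemma nrm0[simp]: "nrm (ocpart M E) = nrm E" by (simp add: ocpart_def)

lemma lspV: "lsp V"
  using nidealD(2-4)[OF N0] unfolding lsp_def by blast

lemma V_meas: "x \<in> V \<Longrightarrow> x \<in> borel_measurable M"
  using nidealD(1)[OF N0] by auto

lemma V_solid: "x \<in> V \<Longrightarrow> z \<in> borel_measurable M \<Longrightarrow> (AE w in M. \<bar>z w\<bar> \<le> \<bar>x w\<bar>) \<Longrightarrow> z \<in> V"
  using solidD[OF nidealD(7)[OF N0]] by blast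

lemma V_solid': "x \<in> V \<Longrightarrow> z \<in> borel_measurable M \<Longrightarrow> (\<And>w. \<bar>z w\<bar> \<le> \<bar>x w\<bar>) \<Longrightarrow> z \<in> V"
  using V_solid by auto

lemma E_solid: "x \<in> elts E \<Longrightarrow> z \<in> borel_measurable M \<Longrightarrow> (AE w in M. \<bar>z w\<bar> \<le> \<bar>x w\<bar>) \<Longrightarrow>
    z \<in> elts E \<and> nrm E z \<le> nrm E x"
  using solidD[OF nidealD(7)[OF NE]] by blast

lemma y_meas: "y \<in> borel_measurable M" using V_meas[OF y] .

definition p :: "('a \<Rightarrow> real) \<Rightarrow> real" where "p x = nrm E (\<lambda>w. max (x w) 0)"

lemma pos_part_E:
  assumes x: "x \<in> elts E" shows "(\<lambda>w. max (x w) 0) \<in> elts E" "nrm E (\<lambda>w. max (x w) 0) \<le> nrm E x"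
proof -
  have "x \<in> borel_measurable M" using nidealD(1)[OF NE] x by auto
  then have m: "(\<lambda>w. max (x w) 0) \<in> borel_measurable M" by measurable
  show "(\<lambda>w. max (x w) 0) \<in> elts E" "nrm E (\<lambda>w. max (x w) 0) \<le> nrm E x"
    using E_solid[OF x m] by auto
qed

lemma sublin_p: "sublin V p"
  unfolding sublin_def
proof (intro conjI ballI allI impI)
  fix x z assume x: "x \<in> V" and z: "z \<in> V"
  have xE: "x \<in> elts E" and zE: "z \<in> elts E" using x z VE by auto
  have xz: "(\<lambda>w. x w + z w) \<in> elts E" using nidealD(3)[OF NE xE zE] .
  have s: "(\<lambda>w. max (x w) 0 + max (z w) 0) \<in> elts E"
    using nidealD(3)[OF NE pos_part_E(1)[OF xE] pos_part_E(1)[OF zE]] .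
  have xm: "x \<in> borel_measurable M" and zm: "z \<in> borel_measurable M" using V_meas x z by auto
  have m: "(\<lambda>w. max (x w + z w) 0) \<in> borel_measurable M" using xm zm by measurable
  have "nrm E (\<lambda>w. max (x w + z w) 0) \<le> nrm E (\<lambda>w. max (x w) 0 + max (z w) 0)"
    using E_solid[OF s m] by auto
  also have "\<dots> \<le> p x + p z" unfolding p_def
    by (rule BIS_facts(2)[OF B pos_part_E(1)[OF xE] pos_part_E(1)[OF zE]])
  finally show "p (\<lambda>w. x w + z w) \<le> p x + p z" by (simp add: p_def)
next
  fix c :: real and x assume c: "0 \<le> c" and x: "x \<in> V"
  have xE: "x \<in> elts E" using x VE by auto
  have "(\<lambda>w. max (c * x w) 0) = (\<lambda>w. c * max (x w) 0)"
    using c by (auto simp: max_mult_distrib_left)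
  then show "p (\<lambda>w. c * x w) = c * p x"
    unfolding p_def using nidealD(6)[OF NE pos_part_E(1)[OF xE], of c] c by simp
qed

lemma exists_phi:
  "\<exists>\<phi>. (\<forall>x\<in>V. \<forall>z\<in>V. \<phi> (\<lambda>w. x w + z w) = \<phi> x + \<phi> z) \<and>
       (\<forall>c. \<forall>x\<in>V. \<phi> (\<lambda>w. c * x w) = c * \<phi> x) \<and> (\<forall>x\<in>V. \<phi> x \<le> p x) \<and> \<phi> y = p y"
  by (rule HB[OF lspV sublin_p y])

end

locale K1 = K0 +
  fixes \<phi> :: "('a \<Rightarrow> real) \<Rightarrow> real"
  assumes phi_add: "\<And>x z. x \<in> V \<Longrightarrow> z \<in> V \<Longrightarrow> \<phi> (\<lambda>w. x w + z w) = \<phi> x + \<phi> z"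
    and phi_scale: "\<And>c x. x \<in> V \<Longrightarrow> \<phi> (\<lambda>w. c * x w) = c * \<phi> x"
    and phi_p: "\<And>x. x \<in> V \<Longrightarrow> \<phi> x \<le> p x"
    and phi_y: "\<phi> y = p y"
begin

lemma phi_zero: "\<phi> (\<lambda>_. 0) = 0"
  using phi_scale[OF nidealD(2)[OF N0], of 0] by simp

lemma phi_diff: "x \<in> V \<Longrightarrow> z \<in> V \<Longrightarrow> \<phi> (\<lambda>w. x w - z w) = \<phi> x - \<phi> z"
proof -
  assume x: "x \<in> V" and z: "z \<in> V"
  have e: "(\<lambda>w. x w - z w) = (\<lambda>w. x w + (-1) * z w)" by auto
  show ?thesis unfolding e phi_add[OF x lspD(3)[OF lspV z]] phi_scale[OF z] by simp
qed

lemma phi_le_nrm: "x \<in> V \<Longrightarrow> \<phi> x \<le> nrm E x"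
  using phi_p[of x] pos_part_E(2)[of x] VE unfolding p_def by force

lemma phi_ge_nrm: "x \<in> V \<Longrightarrow> - nrm E x \<le> \<phi> x"
proof -
  assume x: "x \<in> V"
  have "\<phi> (\<lambda>w. -1 * x w) \<le> nrm E (\<lambda>w. -1 * x w)" by (rule phi_le_nrm[OF lspD(3)[OF lspV x]])
  then show ?thesis using phi_scale[OF x, of "-1"] nidealD(6)[OF N0 x, of "-1"] by simp
qed

lemma phi_mono:
  assumes x: "x \<in> V" and z: "z \<in> V" and le: "AE w in M. x w \<le> z w"
  shows "\<phi> x \<le> \<phi> z"
proof -
  have d: "(\<lambda>w. x w - z w) \<in> V" using lsp_comb[OF lspV x z, of "-1"] by simp
  have dE: "(\<lambda>w. x w - z w) \<in> elts E" using d VE by auto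
  have "p (\<lambda>w. x w - z w) = 0"
  proof -
    have "AE w in M. max (x w - z w) 0 = 0" using le by eventually_elim auto
    then show ?thesis unfolding p_def using BIS_facts(1)[OF B pos_part_E(1)[OF dE]] by simp
  qed
  then have "\<phi> (\<lambda>w. x w - z w) \<le> 0" using phi_p[OF d] by simp
  then show ?thesis using phi_diff[OF x z] by simp
qed

lemma phi_nonneg: "x \<in> V \<Longrightarrow> (AE w in M. 0 \<le> x w) \<Longrightarrow> 0 \<le> \<phi> x"
  using phi_mono[OF nidealD(2)[OF N0]] phi_zero by metis

lemma phi_cong: "x \<in> V \<Longrightarrow> z \<in> V \<Longrightarrow> (AE w in M. x w = z w) \<Longrightarrow> \<phi> x = \<phi> z"
proof -
  assume x: "x \<in> V" and z: "z \<in> V" and e: "AE w in M. x w = z w"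
  have "AE w in M. x w \<le> z w" "AE w in M. z w \<le> x w" using e by (auto elim: eventually_mono)
  then show ?thesis using phi_mono[OF x z] phi_mono[OF z x] by simp
qed

lemma phi_y_nrm: "\<phi> y = nrm E y"
proof -
  have "(\<lambda>w. max (y w) 0) = y"
  proof (rule ext)
    fix w show "max (y w) 0 = y w" using ynn[of w] by (simp add: max_def)
  qed
  then show ?thesis using phi_y by (simp add: p_def)
qed

lemma yA_V: "A \<in> sets M \<Longrightarrow> (\<lambda>w. y w * indicator A w) \<in> V"
  by (rule V_solid'[OF y]) (use y_meas in \<open>auto simp: indicator_def\<close>)

end

context K0 begin

lemma oc_y: "ord_cont_at M E y" using y by (simp add: ocpart_def)

lemma small_le_zero:
  fixes a :: real
  assumes "\<And>n. a < 1 / real (Suc n)" shows "a \<le> 0"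
proof (rule ccontr)
  assume "\<not> a \<le> 0"
  then have "0 < a" by simp
  from reals_Archimedean[OF this] obtain n where "inverse (real (Suc n)) < a" by blast
  then show False using assms[of n] by (simp add: inverse_eq_divide)
qed

lemma carrier:
  "\<exists>Q. Q \<in> sets M \<and> sigma_finite_measure (density M (indicator Q)) \<and> (AE w in M. w \<notin> Q \<longrightarrow> y w = 0)"
proof -
  have "direct_sum_property M" using adm by (simp add: admissible_def)
  then obtain P where P0: "P \<subseteq> sets M \<and> (\<forall>B\<in>P. emeasure M B < \<infinity>) \<and>
          (\<forall>B\<in>P. \<forall>C\<in>P. B \<noteq> C \<longrightarrow> B \<inter> C = {}) \<and> \<Union>P = space M \<and>
          (\<forall>A. A \<subseteq> space M \<longrightarrow> (A \<in> sets M \<longleftrightarrow> (\<forall>B\<in>P. A \<inter> B \<in> sets M))) \<and>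
          (\<forall>A\<in>sets M. emeasure M A =
              (SUP F\<in>{F. finite F \<and> F \<subseteq> P}. \<Sum>B\<in>F. emeasure M (A \<inter> B)))"
    unfolding direct_sum_property_def by (rule exE) (rule that)
  have P: "P \<subseteq> sets M" "\<And>B. B \<in> P \<Longrightarrow> emeasure M B < \<infinity>" "\<Union>P = space M"
    using P0 by auto
  have Pm: "\<And>A. A \<in> sets M \<Longrightarrow> emeasure M A = (SUP F\<in>{F. finite F \<and> F \<subseteq> P}. \<Sum>B\<in>F. emeasure M (A \<inter> B))"
    using P0 by blast
  define dF where "dF F = (\<lambda>w. y w * indicator (space M - \<Union>F) w)" for F
  define D where "D = {dF F | F. finite F \<and> F \<subseteq> P}"
  have UF: "\<Union>F \<in> sets M" if "finite F" "F \<subseteq> P" for F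
    using that P(1) by (intro sets.finite_Union) auto
  have dFm: "dF F \<in> borel_measurable M" if "finite F" "F \<subseteq> P" for F
    unfolding dF_def using UF[OF that] y_meas by measurable
  have dFle: "0 \<le> dF F w \<and> dF F w \<le> \<bar>y w\<bar>" for F w
    using ynn[of w] by (auto simp: dF_def indicator_def)
  have yE: "y \<in> elts E" using y VE by auto
  have dFE: "dF F \<in> elts E" if "finite F" "F \<subseteq> P" for F
  proof -
    have "AE w in M. \<bar>dF F w\<bar> \<le> \<bar>y w\<bar>" using dFle by (intro AE_I2) auto
    then show ?thesis using E_solid[OF yE dFm[OF that]] by blast
  qed
  have "\<exists>d\<in>D. nrm E d < e" if e: "e > 0" for e
  proof (rule ord_cont_atD[OF oc_y _ _ _ _ _ e])
    show "D \<noteq> {}" unfolding D_def by blast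
    show "D \<subseteq> borel_measurable M" unfolding D_def using dFm by blast
    show "\<forall>d\<in>D. AE w in M. 0 \<le> d w \<and> d w \<le> \<bar>y w\<bar>" unfolding D_def using dFle by auto
    show "\<forall>u\<in>D. \<forall>v\<in>D. \<exists>d\<in>D. AE w in M. d w \<le> u w \<and> d w \<le> v w"
    proof (intro ballI)
      fix u v assume "u \<in> D" "v \<in> D"
      then obtain F1 F2 where F: "u = dF F1" "v = dF F2" "finite F1" "F1 \<subseteq> P" "finite F2" "F2 \<subseteq> P"
        unfolding D_def by blast
      have "dF (F1 \<union> F2) \<in> D" unfolding D_def using F by blast
      moreover have "\<forall>w. dF (F1 \<union> F2) w \<le> u w \<and> dF (F1 \<union> F2) w \<le> v w"
        using ynn unfolding F dF_def by (auto simp: indicator_def)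
      ultimately show "\<exists>d\<in>D. AE w in M. d w \<le> u w \<and> d w \<le> v w" by (blast intro: AE_I2)
    qed
    show "\<forall>z\<in>borel_measurable M. (\<forall>d\<in>D. AE w in M. z w \<le> d w) \<longrightarrow> (AE w in M. z w \<le> 0)"
    proof (intro ballI impI)
      fix z assume zm: "z \<in> borel_measurable M" and H: "\<forall>d\<in>D. AE w in M. z w \<le> d w"
      define N where "N = {w \<in> space M. 0 < z w}"
      have Nm: "N \<in> sets M" unfolding N_def using zm by measurable
      have NB: "emeasure M (N \<inter> B) = 0" if B: "B \<in> P" for B
      proof -
        have Bm: "B \<in> sets M" using B P(1) by auto
        have "dF {B} \<in> D" unfolding D_def using B by blast
        then have "AE w in M. z w \<le> dF {B} w" using H by blast
        then have ae: "AE w in M. w \<in> B \<longrightarrow> z w \<le> 0" by eventually_elim (auto simp: dF_def)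
        have eq: "{w \<in> space M. \<not> (w \<in> B \<longrightarrow> z w \<le> 0)} = N \<inter> B"
          using sets.sets_into_space[OF Bm] by (auto simp: N_def)
        have NBm: "N \<inter> B \<in> sets M" using Nm Bm by (rule sets.Int)
        show ?thesis using AE_iff_measurable[OF NBm eq] ae by simp
      qed
      have "emeasure M N = (SUP F\<in>{F. finite F \<and> F \<subseteq> P}. \<Sum>B\<in>F. emeasure M (N \<inter> B))" by (rule Pm[OF Nm])
      also have "\<dots> = (SUP F\<in>{F. finite F \<and> F \<subseteq> P}. (0::ennreal))"
      proof (rule arg_cong[where f=Sup], rule image_cong[OF refl])
        fix F assume "F \<in> {F. finite F \<and> F \<subseteq> P}"
        then have "\<And>B. B \<in> F \<Longrightarrow> emeasure M (N \<inter> B) = 0" using NB by blast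
        then show "(\<Sum>B\<in>F. emeasure M (N \<inter> B)) = 0" by simp
      qed
      also have "\<dots> = 0" by (rule SUP_const) auto
      finally have "emeasure M N = 0" .
      moreover have eq: "{w \<in> space M. \<not> z w \<le> 0} = N" by (auto simp: N_def)
      ultimately show "AE w in M. z w \<le> 0" using AE_iff_measurable[OF Nm eq] by simp
    qed
  qed
  note ex = this
  have "\<forall>n. \<exists>F. finite F \<and> F \<subseteq> P \<and> nrm E (dF F) < 1 / real (Suc n)"
  proof
    fix n
    have "(0::real) < 1 / real (Suc n)" by simp
    from ex[OF this] obtain d where d: "d \<in> D" "nrm E d < 1 / real (Suc n)" by blast
    from d(1) obtain F where "d = dF F" "finite F" "F \<subseteq> P" unfolding D_def by blast
    then show "\<exists>F. finite F \<and> F \<subseteq> P \<and> nrm E (dF F) < 1 / real (Suc n)" using d(2) by blast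
  qed
  from choice[OF this] obtain Fs where Fs': "\<forall>n. finite (Fs n) \<and> Fs n \<subseteq> P \<and> nrm E (dF (Fs n)) < 1 / real (Suc n)"
    by blast
  then have Fs: "\<And>n. finite (Fs n)" "\<And>n. Fs n \<subseteq> P" "\<And>n. nrm E (dF (Fs n)) < 1 / real (Suc n)"
    by auto
  define Q where "Q = (\<Union>n. \<Union>(Fs n))"
  have Qm: "Q \<in> sets M" unfolding Q_def using UF[OF Fs(1) Fs(2)] by auto
  have Qsp: "Q \<subseteq> space M" using sets.sets_into_space[OF Qm] .
  define yQ where "yQ = (\<lambda>w. y w * indicator (space M - Q) w)"
  have yQm: "yQ \<in> borel_measurable M" unfolding yQ_def using Qm y_meas by measurable
  have "nrm E yQ < 1 / real (Suc n)" for n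
  proof -
    have "\<forall>w. \<bar>yQ w\<bar> \<le> \<bar>dF (Fs n) w\<bar>"
      using ynn unfolding yQ_def dF_def Q_def by (auto simp: indicator_def)
    then have "nrm E yQ \<le> nrm E (dF (Fs n))"
      using E_solid[OF dFE[OF Fs(1) Fs(2)] yQm] by auto
    then show ?thesis using Fs(3)[of n] by simp
  qed
  then have "nrm E yQ \<le> 0" by (rule small_le_zero)
  moreover have yQE: "yQ \<in> elts E"
  proof -
    have "AE w in M. \<bar>yQ w\<bar> \<le> \<bar>y w\<bar>" using ynn by (intro AE_I2) (auto simp: yQ_def indicator_def)
    then show ?thesis using E_solid[OF yE yQm] by blast
  qed
  ultimately have "nrm E yQ = 0" using nidealD(5)[OF NE yQE] by simp
  then have "AE w in M. yQ w = 0" using BIS_facts(1)[OF B yQE] by simp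
  from this AE_space have ae: "AE w in M. w \<notin> Q \<longrightarrow> y w = 0"
    by eventually_elim (auto simp: yQ_def)
  have sf: "sigma_finite_measure (density M (indicator Q))"
  proof
    let ?A = "insert (space M - Q) (\<Union>n. Fs n)"
    have "countable ?A" using Fs(1) by (auto intro: countable_finite)
    moreover have "?A \<subseteq> sets (density M (indicator Q))" using Qm Fs(2) P(1) by auto
    moreover have "\<Union>?A = space (density M (indicator Q))" using Qsp unfolding Q_def by auto
    moreover have "\<forall>a\<in>?A. emeasure (density M (indicator Q)) a \<noteq> \<infinity>"
    proof
      fix a assume a: "a \<in> ?A"
      show "emeasure (density M (indicator Q)) a \<noteq> \<infinity>"
      proof (cases "a = space M - Q")
        case True
        have "emeasure (density M (indicator Q)) a = (\<integral>\<^sup>+ w. indicator Q w * indicator a w \<partial>M)"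
          using Qm True by (intro emeasure_density) auto
        also have "\<dots> = (\<integral>\<^sup>+ w. 0 \<partial>M)" by (rule nn_integral_cong) (auto simp: True indicator_def)
        finally show ?thesis by simp
      next
        case False
        then obtain n where an: "a \<in> Fs n" using a by auto
        then have aP: "a \<in> P" using Fs(2) by auto
        then have am: "a \<in> sets M" using P(1) by auto
        have "emeasure (density M (indicator Q)) a = (\<integral>\<^sup>+ w. indicator Q w * indicator a w \<partial>M)"
          using Qm am by (intro emeasure_density) auto
        also have "\<dots> \<le> (\<integral>\<^sup>+ w. indicator a w \<partial>M)" by (rule nn_integral_mono) (auto simp: indicator_def)
        also have "\<dots> = emeasure M a" using am by simp
        also have "\<dots> < \<infinity>" using P(2)[OF aP] .
        finally show ?thesis by simp
      qed
    qed
    ultimately show "\<exists>A. countable A \<and> A \<subseteq> sets (density M (indicator Q)) \<and>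
        \<Union>A = space (density M (indicator Q)) \<and> (\<forall>a\<in>A. emeasure (density M (indicator Q)) a \<noteq> \<infinity>)"
      by blast
  qed
  show ?thesis using Qm sf ae by blast
qed

end

context K1 begin

lemma phi_yA_nonneg: "A \<in> sets M \<Longrightarrow> 0 \<le> \<phi> (\<lambda>w. y w * indicator A w)"
  by (rule phi_nonneg[OF yA_V]) (auto intro!: AE_I2 simp: ynn)

lemma phi_yA_add:
  assumes A: "A \<in> sets M" and B: "B \<in> sets M" and d: "A \<inter> B = {}"
  shows "\<phi> (\<lambda>w. y w * indicator (A \<union> B) w) = \<phi> (\<lambda>w. y w * indicator A w) + \<phi> (\<lambda>w. y w * indicator B w)"
proof -
  have "(\<lambda>w. y w * indicator (A \<union> B) w) = (\<lambda>w. y w * indicator A w + y w * indicator B w)"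
  proof (rule ext)
    fix w show "y w * indicator (A \<union> B) w = y w * indicator A w + y w * indicator B w"
      using d by (cases "w \<in> A"; cases "w \<in> B") (auto simp: indicator_def)
  qed
  then show ?thesis using phi_add[OF yA_V[OF A] yA_V[OF B]] by simp
qed

lemma nu_ca:
  "countably_additive (sets M) (\<lambda>A. ennreal (\<phi> (\<lambda>w. y w * indicator A w)))"
proof -
  let ?m = "\<lambda>A. ennreal (\<phi> (\<lambda>w. y w * indicator A w))"
  have pos: "positive (sets M) ?m" unfolding positive_def using phi_zero by simp
  have add: "additive (sets M) ?m" unfolding additive_def
  proof (intro ballI impI)
    fix A B assume A: "A \<in> sets M" and B: "B \<in> sets M" and d: "A \<inter> B = {}"
    show "?m (A \<union> B) = ?m A + ?m B"
      using phi_yA_add[OF A B d] phi_yA_nonneg[OF A] phi_yA_nonneg[OF B] by (simp add: ennreal_plus)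
  qed
  show ?thesis
    unfolding sets.countably_additive_iff_continuous_from_below[OF pos add]
  proof (intro allI impI)
    fix A :: "nat \<Rightarrow> 'a set" assume A: "range A \<subseteq> sets M" and inc: "incseq A" and U: "(\<Union>i. A i) \<in> sets M"
    define U where "U = (\<Union>i. A i)"
    have Am: "A i \<in> sets M" for i using A by auto
    have Um: "U \<in> sets M" using U by (simp add: U_def)
    define d where "d n = (\<lambda>w. y w * indicator (U - A n) w)" for n
    have dm: "d n \<in> borel_measurable M" for n unfolding d_def using Um Am y_meas by measurable
    have dle: "0 \<le> d n w \<and> d n w \<le> \<bar>y w\<bar>" for n w using ynn[of w] by (auto simp: d_def indicator_def)
    have yE: "y \<in> elts E" using y VE by auto
    have dE: "d n \<in> elts E" for n
    proof -
      have "AE w in M. \<bar>d n w\<bar> \<le> \<bar>y w\<bar>" using dle by (intro AE_I2) auto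
      then show ?thesis using E_solid[OF yE dm] by blast
    qed
    have dmono: "nrm E (d m) \<le> nrm E (d n)" if "n \<le> m" for n m
    proof -
      have "A n \<subseteq> A m" using inc that by (simp add: incseq_def)
      then have "AE w in M. \<bar>d m w\<bar> \<le> \<bar>d n w\<bar>" using ynn by (intro AE_I2) (auto simp: d_def indicator_def)
      then show ?thesis using E_solid[OF dE dm] by blast
    qed
    have small: "\<exists>n. nrm E (d n) < e" if e: "e > 0" for e
    proof -
      have "\<exists>dd\<in>range d. nrm E dd < e"
      proof (rule ord_cont_atD[OF oc_y _ _ _ _ _ e])
        show "range d \<noteq> {}" by simp
        show "range d \<subseteq> borel_measurable M" using dm by auto
        show "\<forall>dd\<in>range d. AE w in M. 0 \<le> dd w \<and> dd w \<le> \<bar>y w\<bar>" using dle by (auto intro!: AE_I2)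
        show "\<forall>u\<in>range d. \<forall>v\<in>range d. \<exists>dd\<in>range d. AE w in M. dd w \<le> u w \<and> dd w \<le> v w"
        proof (intro ballI)
          fix u v assume "u \<in> range d" "v \<in> range d"
          then obtain n m where uv: "u = d n" "v = d m" by blast
          have "\<forall>w. d (max n m) w \<le> u w \<and> d (max n m) w \<le> v w"
          proof
            fix w
            have "A n \<subseteq> A (max n m)" "A m \<subseteq> A (max n m)" using inc by (auto simp: incseq_def)
            then show "d (max n m) w \<le> u w \<and> d (max n m) w \<le> v w"
              using ynn[of w] unfolding uv d_def by (auto simp: indicator_def)
          qed
          then show "\<exists>dd\<in>range d. AE w in M. dd w \<le> u w \<and> dd w \<le> v w" by (blast intro: AE_I2)
        qed
        show "\<forall>z\<in>borel_measurable M. (\<forall>dd\<in>range d. AE w in M. z w \<le> dd w) \<longrightarrow> (AE w in M. z w \<le> 0)"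
        proof (intro ballI impI)
          fix z assume "z \<in> borel_measurable M" and H: "\<forall>dd\<in>range d. AE w in M. z w \<le> dd w"
          then have "\<forall>n. AE w in M. z w \<le> d n w" by auto
          then have "AE w in M. \<forall>n. z w \<le> d n w" by (simp add: AE_all_countable)
          then show "AE w in M. z w \<le> 0"
          proof eventually_elim
            case (elim w)
            show ?case
            proof (cases "w \<in> U")
              case True
              then obtain k where "w \<in> A k" by (auto simp: U_def)
              then show ?thesis using elim[rule_format, of k] by (simp add: d_def)
            next
              case False
              then show ?thesis using elim[rule_format, of 0] by (simp add: d_def)
            qed
          qed
        qed
      qed
      then show ?thesis by auto
    qed
    have AU: "A n \<subseteq> U" for n by (auto simp: U_def)
    have tail: "\<phi> (\<lambda>w. y w * indicator U w) - \<phi> (\<lambda>w. y w * indicator (A n) w) = \<phi> (d n)" for n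
    proof -
      have e: "(\<lambda>w. y w * indicator U w - y w * indicator (A n) w) = d n"
      proof (rule ext)
        fix w show "y w * indicator U w - y w * indicator (A n) w = d n w"
          using AU[of n] by (cases "w \<in> U"; cases "w \<in> A n") (auto simp: d_def indicator_def)
      qed
      show ?thesis using phi_diff[OF yA_V[OF Um] yA_V[OF Am[of n]]] unfolding e by simp
    qed
    have dV: "d n \<in> V" for n unfolding d_def using yA_V[of "U - A n"] Um Am by auto
    have conv: "(\<lambda>n. \<phi> (\<lambda>w. y w * indicator (A n) w)) \<longlonglongrightarrow> \<phi> (\<lambda>w. y w * indicator U w)"
    proof (rule LIMSEQ_I)
      fix e :: real assume e: "0 < e"
      obtain n0 where n0: "nrm E (d n0) < e" using small[OF e] by blast
      have "norm (\<phi> (\<lambda>w. y w * indicator (A n) w) - \<phi> (\<lambda>w. y w * indicator U w)) < e" if "n \<ge> n0" for n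
      proof -
        have "0 \<le> \<phi> (d n)" using phi_nonneg[OF dV] dle by (auto intro!: AE_I2)
        moreover have "\<phi> (d n) \<le> nrm E (d n)" by (rule phi_le_nrm[OF dV])
        moreover have "nrm E (d n) \<le> nrm E (d n0)" by (rule dmono[OF that])
        ultimately show ?thesis using tail[of n] n0 by simp
      qed
      then show "\<exists>no. \<forall>n\<ge>no. norm (\<phi> (\<lambda>w. y w * indicator (A n) w) - \<phi> (\<lambda>w. y w * indicator U w)) < e"
        by blast
    qed
    show "(\<lambda>i. ?m (A i)) \<longlonglongrightarrow> ?m (\<Union>i. A i)"
      unfolding U_def[symmetric] by (rule tendsto_ennrealI[OF conv])
  qed
qed

lemma exists_h:
  "\<exists>h. h \<in> borel_measurable M \<and> (\<forall>w. 0 \<le> h w) \<and>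
     (\<forall>A\<in>sets M. (\<integral>\<^sup>+w. ennreal (h w) * indicator A w \<partial>M) = ennreal (\<phi> (\<lambda>w. y w * indicator A w)))"
proof -
  obtain Q where Qm: "Q \<in> sets M" and sf: "sigma_finite_measure (density M (indicator Q))"
    and aeQ: "AE w in M. w \<notin> Q \<longrightarrow> y w = 0"
    using carrier by blast
  let ?m = "\<lambda>A. ennreal (\<phi> (\<lambda>w. y w * indicator A w))"
  define \<nu> where "\<nu> = measure_of (space M) (sets M) ?m"
  have pos: "positive (sets M) ?m" unfolding positive_def using phi_zero by simp
  have em: "emeasure \<nu> A = ?m A" if "A \<in> sets M" for A
    unfolding \<nu>_def by (rule emeasure_measure_of_sigma[OF sets.sigma_algebra_axioms pos nu_ca that])
  have sets\<nu>: "sets \<nu> = sets M" unfolding \<nu>_def by simp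
  let ?MQ = "density M (indicator Q)"
  have ac: "absolutely_continuous ?MQ \<nu>" unfolding absolutely_continuous_def
  proof
    fix A assume "A \<in> null_sets ?MQ"
    then have Am: "A \<in> sets M" and ae: "AE w in M. w \<in> A \<longrightarrow> indicator Q w = (0::ennreal)"
      using null_sets_density_iff[of "indicator Q" M] Qm by auto
    have "AE w in M. y w * indicator A w = 0"
      using ae aeQ by eventually_elim (auto simp: indicator_def split: if_splits)
    then have "\<phi> (\<lambda>w. y w * indicator A w) = \<phi> (\<lambda>_. 0)"
      by (intro phi_cong[OF yA_V[OF Am] nidealD(2)[OF N0]])
    then have "emeasure \<nu> A = 0" using em[OF Am] phi_zero by simp
    then show "A \<in> null_sets \<nu>" using Am sets\<nu> by (simp add: null_sets_def)
  qed
  have "sets \<nu> = sets ?MQ" using sets\<nu> by simp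
  from sigma_finite_measure.Radon_Nikodym[OF sf ac this]
  obtain g where gm: "g \<in> borel_measurable ?MQ" and gd: "density ?MQ g = \<nu>" by blast
  have gm': "g \<in> borel_measurable M" using gm by simp
  define h0 where "h0 w = indicator Q w * g w" for w
  have h0m: "h0 \<in> borel_measurable M" unfolding h0_def using gm' Qm by measurable
  have dh: "density M h0 = \<nu>"
  proof -
    have h0eq: "h0 = (\<lambda>x. indicator Q x * g x)" by (simp add: h0_def fun_eq_iff)
    show ?thesis using gd density_density_eq[of "indicator Q" M g] gm' Qm unfolding h0eq by simp
  qed
  have int: "(\<integral>\<^sup>+w. h0 w * indicator A w \<partial>M) = ?m A" if A: "A \<in> sets M" for A
  proof -
    have "(\<integral>\<^sup>+w. h0 w * indicator A w \<partial>M) = emeasure (density M h0) A"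
      by (rule emeasure_density[OF h0m A, symmetric])
    then show ?thesis using dh em[OF A] by simp
  qed
  have fin: "AE w in M. h0 w \<noteq> \<infinity>"
  proof (rule nn_integral_PInf_AE[OF h0m])
    have "(\<integral>\<^sup>+w. h0 w \<partial>M) = (\<integral>\<^sup>+w. h0 w * indicator (space M) w \<partial>M)"
      by (rule nn_integral_cong) (auto simp: indicator_def)
    also have "\<dots> = ?m (space M)" by (rule int) simp
    finally show "integral\<^sup>N M h0 \<noteq> \<infinity>" by simp
  qed
  define h where "h w = enn2real (h0 w)" for w
  have hm: "h \<in> borel_measurable M" unfolding h_def using h0m by measurable
  have "(\<integral>\<^sup>+w. ennreal (h w) * indicator A w \<partial>M) = ?m A" if A: "A \<in> sets M" for A
  proof -
    have "(\<integral>\<^sup>+w. ennreal (h w) * indicator A w \<partial>M) = (\<integral>\<^sup>+w. h0 w * indicator A w \<partial>M)"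
      by (rule nn_integral_cong_AE) (use fin in \<open>eventually_elim, auto simp: h_def less_top\<close>)
    then show ?thesis using int[OF A] by simp
  qed
  then show ?thesis using hm by (auto simp: h_def)
qed

end

locale K3 = K1 +
  fixes h :: "'a \<Rightarrow> real"
  assumes hm: "h \<in> borel_measurable M" and hnn: "\<And>w. 0 \<le> h w"
    and hA: "\<And>A. A \<in> sets M \<Longrightarrow> (\<integral>\<^sup>+w. ennreal (h w) * indicator A w \<partial>M) = ennreal (\<phi> (\<lambda>w. y w * indicator A w))"
begin

definition "S = {w \<in> space M. 0 < y w}"
definition "h' w = h w * indicator S w"

lemma Sm: "S \<in> sets M" unfolding S_def using y_meas by measurable

lemma h'm: "h' \<in> borel_measurable M" unfolding h'_def using hm Sm by measurable

lemma h'nn: "0 \<le> h' w" using hnn[of w] by (simp add: h'_def)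

lemma h'_out: "w \<notin> space M \<or> \<not> 0 < y w \<Longrightarrow> h' w = 0"
  by (auto simp: h'_def S_def)

lemma h'A: "A \<in> sets M \<Longrightarrow> (\<integral>\<^sup>+w. ennreal (h' w * indicator A w) \<partial>M) = ennreal (\<phi> (\<lambda>w. y w * indicator A w))"
proof -
  assume A: "A \<in> sets M"
  have AS: "A \<inter> S \<in> sets M" using A Sm by (rule sets.Int)
  have "(\<integral>\<^sup>+w. ennreal (h' w * indicator A w) \<partial>M) = (\<integral>\<^sup>+w. ennreal (h w) * indicator (A \<inter> S) w \<partial>M)"
    by (rule nn_integral_cong) (auto simp: h'_def indicator_def)
  also have "\<dots> = ennreal (\<phi> (\<lambda>w. y w * indicator (A \<inter> S) w))" by (rule hA[OF AS])
  also have "(\<lambda>w. y w * indicator (A \<inter> S) w) = (\<lambda>w. y w * indicator A w)"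
  proof (rule ext)
    fix w
    show "y w * indicator (A \<inter> S) w = y w * indicator A w"
      using sets.sets_into_space[OF A] ynn[of w] by (cases "w \<in> A") (auto simp: S_def indicator_def)
  qed
  finally show ?thesis .
qed

lemma claimC:
  assumes um: "u \<in> borel_measurable M" and unn: "\<And>x. 0 \<le> u x"
  shows "\<forall>v. v \<in> V \<longrightarrow> (\<forall>w. 0 \<le> v w) \<longrightarrow> (AE w in M. y w * u w \<le> v w) \<longrightarrow>
           (\<integral>\<^sup>+w. ennreal (h' w * u w) \<partial>M) \<le> ennreal (\<phi> v)"
  using um unn
proof (induction u rule: borel_measurable_induct_real)
  case (set A)
  show ?case
  proof (intro allI impI)
    fix v assume v: "v \<in> V" "\<forall>w. 0 \<le> v w" "AE w in M. y w * indicator A w \<le> v w"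
    have "(\<integral>\<^sup>+w. ennreal (h' w * indicator A w) \<partial>M) = ennreal (\<phi> (\<lambda>w. y w * indicator A w))"
      by (rule h'A[OF set])
    also have "\<dots> \<le> ennreal (\<phi> v)" by (rule ennreal_leI, rule phi_mono[OF yA_V[OF set] v(1) v(3)])
    finally show "(\<integral>\<^sup>+w. ennreal (h' w * indicator A w) \<partial>M) \<le> ennreal (\<phi> v)" .
  qed
next
  case (mult u c)
  show ?case
  proof (intro allI impI)
    fix v assume v: "v \<in> V" "\<forall>w. 0 \<le> v w" "AE w in M. y w * (c * u w) \<le> v w"
    have pv: "0 \<le> \<phi> v" using phi_nonneg[OF v(1)] v(2) by auto
    show "(\<integral>\<^sup>+w. ennreal (h' w * (c * u w)) \<partial>M) \<le> ennreal (\<phi> v)"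
    proof (cases "c = 0")
      case True then show ?thesis by simp
    next
      case False
      then have cp: "0 < c" using mult.hyps(1) by simp
      define v' where "v' = (\<lambda>w. (1 / c) * v w)"
      have v'V: "v' \<in> V" unfolding v'_def by (rule lspD(3)[OF lspV v(1)])
      have v'nn: "\<forall>w. 0 \<le> v' w" using v(2) cp by (simp add: v'_def)
      have "AE w in M. y w * u w \<le> v' w"
        using v(3) by eventually_elim (use cp in \<open>simp add: v'_def field_simps\<close>)
      then have I: "(\<integral>\<^sup>+w. ennreal (h' w * u w) \<partial>M) \<le> ennreal (\<phi> v')"
        using mult.IH v'V v'nn by blast
      have m: "(\<lambda>w. ennreal (h' w * u w)) \<in> borel_measurable M" using h'm mult.hyps(2) by measurable
      have "(\<integral>\<^sup>+w. ennreal (h' w * (c * u w)) \<partial>M) = (\<integral>\<^sup>+w. ennreal c * ennreal (h' w * u w) \<partial>M)"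
        by (rule nn_integral_cong) (use cp h'nn mult.hyps(3) in \<open>simp add: ennreal_mult[symmetric] mult_ac\<close>)
      also have "\<dots> = ennreal c * (\<integral>\<^sup>+w. ennreal (h' w * u w) \<partial>M)" by (rule nn_integral_cmult[OF m])
      also have "\<dots> \<le> ennreal c * ennreal (\<phi> v')" by (rule mult_left_mono[OF I]) simp
      also have "\<phi> v' = \<phi> v / c" unfolding v'_def phi_scale[OF v(1)] by simp
      also have "ennreal c * ennreal (\<phi> v / c) = ennreal (\<phi> v)"
        using cp pv by (simp add: ennreal_mult[symmetric])
      finally show ?thesis .
    qed
  qed
next
  case (add u v')
  show ?case
  proof (intro allI impI)
    fix v assume v: "v \<in> V" "\<forall>w. 0 \<le> v w" "AE w in M. y w * (v' w + u w) \<le> v w"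
    define Su where "Su = {w \<in> space M. u w \<noteq> 0}"
    have Sum: "Su \<in> sets M" unfolding Su_def using add.hyps(1) by measurable
    define v1 where "v1 = (\<lambda>w. v w * indicator Su w)"
    define v2 where "v2 = (\<lambda>w. v w - v1 w)"
    have vm: "v \<in> borel_measurable M" using V_meas[OF v(1)] .
    have v1m: "v1 \<in> borel_measurable M" unfolding v1_def using vm Sum by measurable
    have v2m: "v2 \<in> borel_measurable M" unfolding v2_def using vm v1m by measurable
    have v1b: "0 \<le> v1 w \<and> v1 w \<le> v w" for w using v(2) by (auto simp: v1_def indicator_def)
    have v2b: "0 \<le> v2 w \<and> v2 w \<le> v w" for w using v1b[of w] v(2) by (auto simp: v2_def)
    have a1: "\<bar>v1 w\<bar> \<le> \<bar>v w\<bar>" for w using v1b[of w] by (auto simp: abs_if)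
    have a2: "\<bar>v2 w\<bar> \<le> \<bar>v w\<bar>" for w using v2b[of w] by (auto simp: abs_if)
    have v1V: "v1 \<in> V" by (rule V_solid'[OF v(1) v1m a1])
    have v2V: "v2 \<in> V" by (rule V_solid'[OF v(1) v2m a2])
    have ae1: "AE w in M. y w * u w \<le> v1 w"
      using v(3) AE_space
    proof eventually_elim
      case (elim w)
      show ?case
      proof (cases "u w = 0")
        case True then show ?thesis using v1b[of w] by simp
      next
        case False
        then have "v' w = 0" using add.hyps(5) elim(2) by blast
        then show ?thesis using elim(1) False elim(2) by (simp add: v1_def Su_def)
      qed
    qed
    have ae2: "AE w in M. y w * v' w \<le> v2 w"
      using v(3) AE_space
    proof eventually_elim
      case (elim w)
      show ?case
      proof (cases "u w = 0")
        case True then show ?thesis using elim(1) elim(2) by (simp add: v2_def v1_def Su_def)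
      next
        case False
        then have "v' w = 0" using add.hyps(5) elim(2) by blast
        then show ?thesis using v2b[of w] by simp
      qed
    qed
    have I1: "(\<integral>\<^sup>+w. ennreal (h' w * u w) \<partial>M) \<le> ennreal (\<phi> v1)"
      using add.IH(1) v1V v1b ae1 by blast
    have I2: "(\<integral>\<^sup>+w. ennreal (h' w * v' w) \<partial>M) \<le> ennreal (\<phi> v2)"
      using add.IH(2) v2V v2b ae2 by blast
    have m1: "(\<lambda>w. ennreal (h' w * u w)) \<in> borel_measurable M" using h'm add.hyps(1) by measurable
    have m2: "(\<lambda>w. ennreal (h' w * v' w)) \<in> borel_measurable M" using h'm add.hyps(3) by measurable
    have "(\<integral>\<^sup>+w. ennreal (h' w * (v' w + u w)) \<partial>M) =
        (\<integral>\<^sup>+w. ennreal (h' w * v' w) + ennreal (h' w * u w) \<partial>M)"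
      by (rule nn_integral_cong) (use h'nn add.hyps(2,4) in \<open>simp add: distrib_left ennreal_plus\<close>)
    also have "\<dots> = (\<integral>\<^sup>+w. ennreal (h' w * v' w) \<partial>M) + (\<integral>\<^sup>+w. ennreal (h' w * u w) \<partial>M)"
      by (rule nn_integral_add[OF m2 m1])
    also have "\<dots> \<le> ennreal (\<phi> v2) + ennreal (\<phi> v1)" by (rule add_mono[OF I2 I1])
    also have "\<dots> = ennreal (\<phi> v2 + \<phi> v1)"
      using phi_nonneg[OF v1V] phi_nonneg[OF v2V] v1b v2b by (simp add: ennreal_plus)
    also have "\<phi> v2 + \<phi> v1 = \<phi> v"
    proof -
      have "(\<lambda>w. v2 w + v1 w) = v" by (auto simp: v2_def)
      then show ?thesis using phi_add[OF v2V v1V] by simp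
    qed
    finally show "(\<integral>\<^sup>+w. ennreal (h' w * (v' w + u w)) \<partial>M) \<le> ennreal (\<phi> v)" .
  qed
next
  case (seq U)
  show ?case
  proof (intro allI impI)
    fix v assume v: "v \<in> V" "\<forall>w. 0 \<le> v w" "AE w in M. y w * u w \<le> v w"
    have Ule: "U i w \<le> u w" if "w \<in> space M" for i w
    proof (rule incseq_le)
      show "incseq (\<lambda>i. U i w)" using \<open>incseq U\<close> by (auto simp: incseq_def le_fun_def)
      show "(\<lambda>i. U i w) \<longlonglongrightarrow> u w" using seq.hyps(4)[OF that] .
    qed
    have bnd: "(\<integral>\<^sup>+w. ennreal (h' w * U i w) \<partial>M) \<le> ennreal (\<phi> v)" for i
    proof -
      have "AE w in M. y w * U i w \<le> v w"
        using v(3) AE_space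
      proof eventually_elim
        case (elim w)
        have "y w * U i w \<le> y w * u w" using Ule[OF elim(2)] ynn[of w] by (rule mult_left_mono)
        then show ?case using elim(1) by simp
      qed
      then show ?thesis using seq.IH[of i] v(1,2) by blast
    qed
    have lim: "(\<lambda>i. \<integral>\<^sup>+w. ennreal (h' w * U i w) \<partial>M) \<longlonglongrightarrow> (\<integral>\<^sup>+w. ennreal (h' w * u w) \<partial>M)"
    proof (rule nn_integral_LIMSEQ)
      show "incseq (\<lambda>i w. ennreal (h' w * U i w))"
        using \<open>incseq U\<close> h'nn by (auto simp: incseq_def le_fun_def intro!: ennreal_leI mult_left_mono)
      show "(\<lambda>w. ennreal (h' w * U i w)) \<in> borel_measurable M" for i using h'm seq.hyps(1)[of i] by measurable
      show "(\<lambda>i. ennreal (h' w * U i w)) \<longlonglongrightarrow> ennreal (h' w * u w)" for w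
      proof (cases "w \<in> space M")
        case True
        show ?thesis by (intro tendsto_ennrealI tendsto_mult_left seq.hyps(4)[OF True])
      next
        case False
        then show ?thesis using h'_out[of w] by simp
      qed
    qed
    show "(\<integral>\<^sup>+w. ennreal (h' w * u w) \<partial>M) \<le> ennreal (\<phi> v)"
      using LIMSEQ_le_const2[OF lim] bnd by blast
  qed
qed

end

context K3 begin

definition "f w = (if 0 < y w then h' w / y w else 0)"

lemma fm: "f \<in> borel_measurable M" unfolding f_def using h'm y_meas by measurable

lemma fnn: "0 \<le> f w" using h'nn[of w] ynn[of w] by (simp add: f_def)

lemma f_bound:
  assumes z: "z \<in> V" and znn: "\<And>w. 0 \<le> z w"
  shows "(\<integral>\<^sup>+w. ennreal (f w * z w) \<partial>M) \<le> ennreal (nrm E z)"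
proof -
  define u where "u w = (if 0 < y w then z w / y w else 0)" for w
  have um: "u \<in> borel_measurable M" unfolding u_def using V_meas[OF z] y_meas by measurable
  have unn: "0 \<le> u w" for w using znn[of w] ynn[of w] by (simp add: u_def)
  have "AE w in M. y w * u w \<le> z w" using znn by (intro AE_I2) (simp add: u_def)
  then have "(\<integral>\<^sup>+w. ennreal (h' w * u w) \<partial>M) \<le> ennreal (\<phi> z)"
    using claimC[OF um unn] z znn by blast
  moreover have e: "\<And>w. f w * z w = h' w * u w" by (auto simp: f_def u_def)
  ultimately have "(\<integral>\<^sup>+w. ennreal (f w * z w) \<partial>M) \<le> ennreal (\<phi> z)" by (simp only: e)
  also have "\<dots> \<le> ennreal (nrm E z)" by (rule ennreal_leI[OF phi_le_nrm[OF z]])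
  finally show ?thesis .
qed

lemma f_int:
  assumes x: "x \<in> V"
  shows "integrable M (\<lambda>w. f w * x w)" "integral\<^sup>L M (\<lambda>w. f w * x w) \<le> nrm E x"
proof -
  have xm: "x \<in> borel_measurable M" using V_meas[OF x] .
  have axm: "(\<lambda>w. \<bar>x w\<bar>) \<in> borel_measurable M" using xm by measurable
  have ax: "(\<lambda>w. \<bar>x w\<bar>) \<in> V" by (rule V_solid'[OF x axm]) simp
  have nax: "nrm E (\<lambda>w. \<bar>x w\<bar>) \<le> nrm E x"
    using E_solid[of x "\<lambda>w. \<bar>x w\<bar>"] x VE axm by auto
  have eq: "(\<lambda>w. \<bar>f w * x w\<bar>) = (\<lambda>w. f w * \<bar>x w\<bar>)" using fnn by (auto simp: abs_mult)
  have fx: "(\<lambda>w. f w * x w) \<in> borel_measurable M" using fm xm by measurable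
  have bnd: "(\<integral>\<^sup>+w. ennreal (norm (f w * x w)) \<partial>M) \<le> ennreal (nrm E (\<lambda>w. \<bar>x w\<bar>))"
    using f_bound[OF ax] eq by (simp add: fun_eq_iff)
  then have "(\<integral>\<^sup>+w. ennreal (norm (f w * x w)) \<partial>M) < \<infinity>"
    using order.strict_trans1 by fastforce
  then show int: "integrable M (\<lambda>w. f w * x w)" by (rule integrableI_bounded[OF fx])
  have "integral\<^sup>L M (\<lambda>w. f w * x w) \<le> integral\<^sup>L M (\<lambda>w. \<bar>f w * x w\<bar>)"
    by (rule integral_mono_AE') (use int in auto)
  also have "\<dots> = enn2real (\<integral>\<^sup>+w. ennreal (\<bar>f w * x w\<bar>) \<partial>M)"
    by (rule integral_eq_nn_integral) (use fx in auto)
  also have "\<dots> \<le> enn2real (ennreal (nrm E (\<lambda>w. \<bar>x w\<bar>)))"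
    by (rule enn2real_mono) (use bnd in auto)
  also have "\<dots> = nrm E (\<lambda>w. \<bar>x w\<bar>)" using nidealD(5)[OF N0 ax] by simp
  also have "\<dots> \<le> nrm E x" by (rule nax)
  finally show "integral\<^sup>L M (\<lambda>w. f w * x w) \<le> nrm E x" .
qed

lemma f_dual: "f \<in> elts (dual M (ocpart M E))" "nrm (dual M (ocpart M E)) f \<le> 1"
proof -
  have b: "integral\<^sup>L M (\<lambda>w. f w * x w) \<le> 1" if "x \<in> V" "nrm (ocpart M E) x \<le> 1" for x
    using f_int(2)[OF that(1)] that(2) by simp
  have "bdd_above (dset M (ocpart M E) f)" unfolding bdd_above_def dset_def using b by blast
  then show "f \<in> elts (dual M (ocpart M E))" unfolding dual_simps using fm f_int(1) by blast
  show "nrm (dual M (ocpart M E)) f \<le> 1" by (rule dual_least'[OF N0 b])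
qed

lemma f_y: "integral\<^sup>L M (\<lambda>w. f w * y w) = nrm E y"
proof -
  have eq: "(\<lambda>w. f w * y w) = h'" using h'_out by (auto simp: f_def fun_eq_iff)
  have "(\<integral>\<^sup>+w. ennreal (h' w) \<partial>M) = (\<integral>\<^sup>+w. ennreal (h' w * indicator (space M) w) \<partial>M)"
    by (rule nn_integral_cong) (auto simp: indicator_def)
  also have "\<dots> = ennreal (\<phi> (\<lambda>w. y w * indicator (space M) w))" by (rule h'A) simp
  also have "\<phi> (\<lambda>w. y w * indicator (space M) w) = \<phi> y"
    by (rule phi_cong[OF yA_V[OF sets.top] y]) (auto intro!: AE_I2)
  finally have I: "(\<integral>\<^sup>+w. ennreal (h' w) \<partial>M) = ennreal (nrm E y)" using phi_y_nrm by simp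
  have "integral\<^sup>L M h' = enn2real (\<integral>\<^sup>+w. ennreal (h' w) \<partial>M)"
    by (rule integral_eq_nn_integral) (use h'm h'nn in auto)
  also have "\<dots> = nrm E y" unfolding I using nidealD(5)[OF N0 y] by simp
  finally show ?thesis unfolding eq .
qed

end

lemma norming_pos:
  assumes adm: "admissible M" and J0: "J0 M E" and y: "y \<in> elts (ocpart M E)" and ynn: "\<And>w. 0 \<le> y w"
  shows "\<exists>f\<in>elts (dual M (ocpart M E)). nrm (dual M (ocpart M E)) f \<le> 1 \<and>
           integral\<^sup>L M (\<lambda>w. f w * y w) = nrm E y"
proof -
  interpret K0 M E y using adm J0 y ynn by unfold_locales
  obtain \<phi> where phi: "\<forall>x\<in>V. \<forall>z\<in>V. \<phi> (\<lambda>w. x w + z w) = \<phi> x + \<phi> z"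
    "\<forall>c. \<forall>x\<in>V. \<phi> (\<lambda>w. c * x w) = c * \<phi> x" "\<forall>x\<in>V. \<phi> x \<le> p x" "\<phi> y = p y"
    using exists_phi by blast
  interpret K1 M E y \<phi> using phi by unfold_locales auto
  obtain h where h: "h \<in> borel_measurable M" "\<forall>w. 0 \<le> h w"
    "\<forall>A\<in>sets M. (\<integral>\<^sup>+w. ennreal (h w) * indicator A w \<partial>M) = ennreal (\<phi> (\<lambda>w. y w * indicator A w))"
    using exists_h by blast
  interpret K3 M E y \<phi> h using h by unfold_locales auto
  show ?thesis using f_dual f_y by blast
qed

lemma dual_nideal:
  assumes A: "nideal M A" shows "nideal M (dual M A)"
  unfolding nideal_def
proof (intro conjI ballI allI)
  show "linear_sub M (elts (dual M A))" unfolding linear_sub_def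
    using dual_zero(1)[OF A] dual_add(1)[OF A] dual_scale(1)[OF A] dual_memD(1) by blast
  show "0 \<le> nrm (dual M A) f" if "f \<in> elts (dual M A)" for f using dual_nonneg[OF A that] .
  show "solid M (dual M A)" by (rule dual_solid[OF A])
  fix c :: real and f assume f: "f \<in> elts (dual M A)"
  show "nrm (dual M A) (\<lambda>w. c * f w) = \<bar>c\<bar> * nrm (dual M A) f"
  proof (cases "c = 0")
    case True
    then show ?thesis using dual_zero(2)[OF A] by simp
  next
    case False
    have le1: "nrm (dual M A) (\<lambda>w. c * f w) \<le> \<bar>c\<bar> * nrm (dual M A) f" by (rule dual_scale(2)[OF A f])
    have cf: "(\<lambda>w. c * f w) \<in> elts (dual M A)" by (rule dual_scale(1)[OF A f])
    have "nrm (dual M A) (\<lambda>w. (1 / c) * (c * f w)) \<le> \<bar>1 / c\<bar> * nrm (dual M A) (\<lambda>w. c * f w)"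
      by (rule dual_scale(2)[OF A cf])
    moreover have "(\<lambda>w. (1 / c) * (c * f w)) = f" using False by auto
    ultimately have "nrm (dual M A) f \<le> \<bar>1 / c\<bar> * nrm (dual M A) (\<lambda>w. c * f w)" by simp
    then have "\<bar>c\<bar> * nrm (dual M A) f \<le> nrm (dual M A) (\<lambda>w. c * f w)"
      using False by (simp add: field_simps)
    then show ?thesis using le1 by simp
  qed
qed

lemma small_le_zero':
  fixes a :: real
  assumes "\<And>n. a \<le> 1 / real (Suc n)" shows "a \<le> 0"
proof (rule ccontr)
  assume "\<not> a \<le> 0"
  then have "0 < a" by simp
  from reals_Archimedean[OF this] obtain n where "inverse (real (Suc n)) < a" by blast
  then show False using assms[of n] by (simp add: inverse_eq_divide)
qed

lemma BIS_complete:
  assumes B: "BIS M E" and X: "\<And>n. X n \<in> elts E"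
    and C: "\<forall>e>0. \<exists>N. \<forall>m\<ge>N. \<forall>n\<ge>N. nrm E (\<lambda>w. X m w - X n w) < e"
  shows "\<exists>x\<in>elts E. (\<lambda>n. nrm E (\<lambda>w. X n w - x w)) \<longlonglongrightarrow> 0"
proof -
  have H: "\<forall>X. (\<forall>n. X n \<in> elts E) \<longrightarrow>
        (\<forall>e>0. \<exists>N. \<forall>m\<ge>N. \<forall>n\<ge>N. nrm E (\<lambda>w. X m w - X n w) < e) \<longrightarrow>
        (\<exists>x\<in>elts E. (\<lambda>n. nrm E (\<lambda>w. X n w - x w)) \<longlonglongrightarrow> 0)"
    using B unfolding BIS_def by (elim conjE) assumption
  have "\<forall>n. X n \<in> elts E" using X by blast
  from mp[OF mp[OF spec[OF H, of X] this] C] show ?thesis .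
qed

primrec runmax :: "(nat \<Rightarrow> 'a \<Rightarrow> real) \<Rightarrow> nat \<Rightarrow> 'a \<Rightarrow> real" where
  "runmax Y 0 = Y 0"
| "runmax Y (Suc n) = (\<lambda>w. max (runmax Y n w) (Y (Suc n) w))"

lemma runmax_ge: "Y n w \<le> runmax Y n w"
  by (cases n) auto

lemma runmax_mono: "n \<le> m \<Longrightarrow> runmax Y n w \<le> runmax Y m w"
proof (induction m)
  case 0 then show ?case by simp
next
  case (Suc m)
  then show ?case by (cases "n = Suc m") (auto intro: order_trans)
qed

lemma runmax_bounds:
  assumes "\<And>n w. 0 \<le> Y n w \<and> Y n w \<le> b w"
  shows "0 \<le> runmax Y n w \<and> runmax Y n w \<le> b w"
  using assms by (induction n) (auto simp: max_def)

lemma runmax_mem: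
  assumes N: "nideal M A" and Y: "\<And>n. Y n \<in> elts A" and nn: "\<And>n w. 0 \<le> Y n w"
  shows "runmax Y n \<in> elts A"
proof (induction n)
  case 0 then show ?case using Y by simp
next
  case (Suc n)
  have s: "(\<lambda>w. runmax Y n w + Y (Suc n) w) \<in> elts A" using nidealD(3)[OF N Suc Y] .
  have m1: "runmax Y n \<in> borel_measurable M" using nidealD(1)[OF N] Suc by auto
  have m2: "Y (Suc n) \<in> borel_measurable M" using nidealD(1)[OF N] Y[of "Suc n"] by auto
  have m: "runmax Y (Suc n) \<in> borel_measurable M" using m1 m2 by simp
  have nn': "0 \<le> runmax Y n w" for w by (induction n) (auto simp: nn max_def)
  have "\<And>w. \<bar>runmax Y (Suc n) w\<bar> \<le> \<bar>runmax Y n w + Y (Suc n) w\<bar>"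
    using nn' nn by (auto simp: max_def)
  then show ?case using solidD[OF nidealD(7)[OF N] s m] by auto
qed

lemma norming:
  assumes adm: "admissible M" and J0: "J0 M E" and y: "y \<in> elts (ocpart M E)"
  shows "nrm E y \<le> nrm (dual M (dual M (ocpart M E))) y"
proof -
  have B: "BIS M E" using J0 by (simp add: J0_def)
  have N0: "nideal M (ocpart M E)" by (rule J0_ocpart_nideal[OF J0])
  have NG: "nideal M (dual M (dual M (ocpart M E)))" by (intro dual_nideal N0)
  have ym: "y \<in> borel_measurable M" using nidealD(1)[OF N0] y by auto
  have aym: "(\<lambda>w. \<bar>y w\<bar>) \<in> borel_measurable M" using ym by measurable
  have ay: "(\<lambda>w. \<bar>y w\<bar>) \<in> elts (ocpart M E)"
    using solidD[OF nidealD(7)[OF N0] y aym] by simp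
  obtain f where f: "f \<in> elts (dual M (ocpart M E))" "nrm (dual M (ocpart M E)) f \<le> 1"
    "integral\<^sup>L M (\<lambda>w. f w * \<bar>y w\<bar>) = nrm E (\<lambda>w. \<bar>y w\<bar>)"
    using norming_pos[OF adm J0 ay] by auto
  have sub: "subset1 (ocpart M E) (dual M (dual M (ocpart M E)))" by (rule into_bidual[OF N0])
  have yG: "y \<in> elts (dual M (dual M (ocpart M E)))" and ayG: "(\<lambda>w. \<bar>y w\<bar>) \<in> elts (dual M (dual M (ocpart M E)))"
    using sub y ay unfolding subset1_def by auto
  have ayE: "(\<lambda>w. \<bar>y w\<bar>) \<in> elts E" using ay by (simp add: ocpart_def)
  have "nrm E y \<le> nrm E (\<lambda>w. \<bar>y w\<bar>)"
    using solidD[OF BIS_solid[OF B] ayE ym] by simp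
  also have "\<dots> = integral\<^sup>L M (\<lambda>w. \<bar>y w\<bar> * f w)" using f(3) by (simp add: mult.commute)
  also have "\<dots> \<le> nrm (dual M (dual M (ocpart M E))) (\<lambda>w. \<bar>y w\<bar>)"
    by (rule dual_upper[OF ayG f(1,2)])
  also have "\<dots> \<le> nrm (dual M (dual M (ocpart M E))) y"
    using solidD[OF nidealD(7)[OF NG] yG aym] by simp
  finally show ?thesis .
qed

lemma max_width_mono: "S \<subseteq> T \<Longrightarrow> max_width M S \<Longrightarrow> max_width M T"
  unfolding max_width_def by blast

lemma Gzero:
  assumes J0: "J0 M E" and v: "v \<in> elts (dual M (dual M (ocpart M E)))"
    and n0: "nrm (dual M (dual M (ocpart M E))) v = 0"
  shows "AE w in M. v w = 0"
proof (rule ccontr)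
  assume nz: "\<not> (AE w in M. v w = 0)"
  have N0: "nideal M (ocpart M E)" by (rule J0_ocpart_nideal[OF J0])
  have N1: "nideal M (dual M (ocpart M E))" by (rule dual_nideal[OF N0])
  have B: "BIS M E" using J0 by (simp add: J0_def)
  have F: "foundation M (ocpart M (dual M E)) (dual M E)" using J0 by (simp add: J0_def)
  have mw0: "max_width M (elts (ocpart M (dual M E)))" using F by (simp add: foundation_def)
  have s0: "elts (ocpart M (dual M E)) \<subseteq> elts (dual M E)" by (auto simp: ocpart_def)
  have "subset1 (ocpart M E) E" by (auto simp: subset1_def ocpart_def)
  then have "subset1 (dual M E) (dual M (ocpart M E))"
    by (rule dual_antitone) (use nidealD(2)[OF N0] nideal_zero[OF N0] in auto)
  then have s1: "elts (dual M E) \<subseteq> elts (dual M (ocpart M E))" by (simp add: subset1_def)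
  have mw: "max_width M (elts (dual M (ocpart M E)))"
    using max_width_mono[OF _ mw0] s0 s1 by blast
  have vm: "v \<in> borel_measurable M" using dual_memD(1)[OF v] .
  have "\<not> (\<forall>f\<in>elts (dual M (ocpart M E)). AE w in M. v w * f w = 0)"
    using mw vm nz unfolding max_width_def by blast
  then obtain f where f: "f \<in> elts (dual M (ocpart M E))" and fz: "\<not> (AE w in M. v w * f w = 0)" by blast
  note st = sgn_trick[OF N1 f vm]
  define g where "g = (\<lambda>w. sgn (v w * f w) * f w)"
  have g: "g \<in> elts (dual M (ocpart M E))" using st(1) by (simp add: g_def)
  have gn: "0 \<le> nrm (dual M (ocpart M E)) g" by (rule dual_nonneg[OF N0 g])
  define c where "c = 1 / (nrm (dual M (ocpart M E)) g + 1)"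
  have cp: "0 < c" using gn by (simp add: c_def)
  have cg: "(\<lambda>w. c * g w) \<in> elts (dual M (ocpart M E))" by (rule dual_scale(1)[OF N0 g])
  have "nrm (dual M (ocpart M E)) (\<lambda>w. c * g w) \<le> \<bar>c\<bar> * nrm (dual M (ocpart M E)) g"
    by (rule dual_scale(2)[OF N0 g])
  also have "\<dots> \<le> 1" using cp gn by (simp add: c_def field_simps)
  finally have cg1: "nrm (dual M (ocpart M E)) (\<lambda>w. c * g w) \<le> 1" .
  have "integral\<^sup>L M (\<lambda>w. v w * (c * g w)) \<le> nrm (dual M (dual M (ocpart M E))) v"
    by (rule dual_upper[OF v cg cg1])
  then have le0: "integral\<^sup>L M (\<lambda>w. v w * (c * g w)) \<le> 0" using n0 by simp
  have vg: "(\<lambda>w. v w * g w) = (\<lambda>w. \<bar>v w * f w\<bar>)" using st(3) by (simp add: g_def)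
  have int: "integrable M (\<lambda>w. \<bar>v w * f w\<bar>)" using dual_memD(2)[OF v g] vg by simp
  have e: "integral\<^sup>L M (\<lambda>w. v w * (c * g w)) = c * integral\<^sup>L M (\<lambda>w. \<bar>v w * f w\<bar>)"
    using vg by (simp add: algebra_simps fun_eq_iff)
  have i1: "integral\<^sup>L M (\<lambda>w. \<bar>v w * f w\<bar>) \<noteq> 0"
    using integral_nonneg_eq_0_iff_AE[OF int] fz by simp
  have i2: "0 \<le> integral\<^sup>L M (\<lambda>w. \<bar>v w * f w\<bar>)" by simp
  have "0 < integral\<^sup>L M (\<lambda>w. \<bar>v w * f w\<bar>)" using i1 i2 by linarith
  then have "0 < integral\<^sup>L M (\<lambda>w. v w * (c * g w))" unfolding e using cp by simp
  then show False using le0 by simp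
qed

lemma max_widthD: "max_width M S \<Longrightarrow> z \<in> borel_measurable M \<Longrightarrow> (\<forall>y\<in>S. AE w in M. z w * y w = 0) \<Longrightarrow>
    AE w in M. z w = 0"
  unfolding max_width_def by blast

lemma part3_main:
  assumes adm: "admissible M" and J0: "J0 M E"
    and x: "x \<in> elts (ocpart M (dual M (dual M (ocpart M E))))"
  shows "x \<in> elts E \<and> nrm E x \<le> nrm (dual M (dual M (ocpart M E))) x"
proof -
  let ?E0 = "ocpart M E" let ?E1 = "dual M (ocpart M E)" let ?G = "dual M (dual M (ocpart M E))"
  have B: "BIS M E" using J0 by (simp add: J0_def)
  have NE: "nideal M E" by (rule BIS_nideal[OF B])
  have N0: "nideal M ?E0" by (rule J0_ocpart_nideal[OF J0])
  have N1: "nideal M ?E1" by (rule dual_nideal[OF N0])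
  have NG: "nideal M ?G" by (rule dual_nideal[OF N1])
  have SG: "solid M ?G" by (rule nidealD(7)[OF NG])
  have SE: "solid M E" by (rule BIS_solid[OF B])
  have S0: "solid M ?E0" by (rule nidealD(7)[OF N0])
  have xG: "x \<in> elts ?G" and oc: "ord_cont_at M ?G x" using x by (auto simp: ocpart_def)
  have xm: "x \<in> borel_measurable M" using dual_memD(1)[OF xG] .
  have axm: "(\<lambda>w. \<bar>x w\<bar>) \<in> borel_measurable M" using xm by measurable
  have mw0: "max_width M (elts ?E0)" using J0 by (simp add: J0_def foundation_def)
  have E0m: "\<And>y. y \<in> elts ?E0 \<Longrightarrow> y \<in> borel_measurable M" using nidealD(1)[OF N0] by auto
  have E0E: "\<And>y. y \<in> elts ?E0 \<Longrightarrow> y \<in> elts E" by (simp add: ocpart_def)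
  define D where "D = {(\<lambda>w. \<bar>x w\<bar> - y w) | y. y \<in> elts ?E0 \<and> (\<forall>w. 0 \<le> y w \<and> y w \<le> \<bar>x w\<bar>)}"
  have Dmem: "(\<lambda>w. \<bar>x w\<bar> - y w) \<in> D" if "y \<in> elts ?E0" "\<forall>w. 0 \<le> y w \<and> y w \<le> \<bar>x w\<bar>" for y
    unfolding D_def using that by blast
  have approx: "\<exists>d\<in>D. nrm ?G d < e" if e: "e > 0" for e
  proof (rule ord_cont_atD[OF oc _ _ _ _ _ e])
    show "D \<noteq> {}" using Dmem[OF nidealD(2)[OF N0]] by auto
    show "D \<subseteq> borel_measurable M" unfolding D_def using E0m axm by auto
    show "\<forall>d\<in>D. AE w in M. 0 \<le> d w \<and> d w \<le> \<bar>x w\<bar>" unfolding D_def by (auto intro!: AE_I2)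
    show "\<forall>u\<in>D. \<forall>v\<in>D. \<exists>d\<in>D. AE w in M. d w \<le> u w \<and> d w \<le> v w"
    proof (intro ballI)
      fix u v assume "u \<in> D" "v \<in> D"
      then obtain y1 y2 where y: "u = (\<lambda>w. \<bar>x w\<bar> - y1 w)" "v = (\<lambda>w. \<bar>x w\<bar> - y2 w)"
        "y1 \<in> elts ?E0" "\<forall>w. 0 \<le> y1 w \<and> y1 w \<le> \<bar>x w\<bar>" "y2 \<in> elts ?E0" "\<forall>w. 0 \<le> y2 w \<and> y2 w \<le> \<bar>x w\<bar>"
        unfolding D_def by blast
      define y3 where "y3 = (\<lambda>w. max (y1 w) (y2 w))"
      have s: "(\<lambda>w. y1 w + y2 w) \<in> elts ?E0" by (rule nidealD(3)[OF N0 y(3) y(5)])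
      have y3m: "y3 \<in> borel_measurable M" unfolding y3_def using E0m[OF y(3)] E0m[OF y(5)] by measurable
      have "AE w in M. \<bar>y3 w\<bar> \<le> \<bar>y1 w + y2 w\<bar>" using y(4,6) by (intro AE_I2) (auto simp: y3_def max_def)
      then have y3E: "y3 \<in> elts ?E0" using solidD[OF S0 s y3m] by blast
      have "\<forall>w. 0 \<le> y3 w \<and> y3 w \<le> \<bar>x w\<bar>" using y(4,6) by (auto simp: y3_def max_def)
      then have inD: "(\<lambda>w. \<bar>x w\<bar> - y3 w) \<in> D" by (rule Dmem[OF y3E])
      have ae: "AE w in M. \<bar>x w\<bar> - y3 w \<le> u w \<and> \<bar>x w\<bar> - y3 w \<le> v w"
        unfolding y by (intro AE_I2) (auto simp: y3_def)
      show "\<exists>d\<in>D. AE w in M. d w \<le> u w \<and> d w \<le> v w"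
      proof (rule bexI[OF _ inD])
        show "AE w in M. \<bar>x w\<bar> - y3 w \<le> u w \<and> \<bar>x w\<bar> - y3 w \<le> v w" by (rule ae)
      qed
    qed
    show "\<forall>z\<in>borel_measurable M. (\<forall>d\<in>D. AE w in M. z w \<le> d w) \<longrightarrow> (AE w in M. z w \<le> 0)"
    proof (intro ballI impI)
      fix z assume zm: "z \<in> borel_measurable M" and H: "\<forall>d\<in>D. AE w in M. z w \<le> d w"
      show "AE w in M. z w \<le> 0"
      proof (rule ccontr)
        assume nz: "\<not> (AE w in M. z w \<le> 0)"
        define zi where "zi = (\<lambda>w. indicator {w \<in> space M. 0 < z w} w :: real)"
        have zim: "zi \<in> borel_measurable M" unfolding zi_def using zm by measurable
        have "\<not> (AE w in M. zi w = 0)"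
        proof
          assume "AE w in M. zi w = 0"
          from this AE_space have "AE w in M. z w \<le> 0"
            by eventually_elim (auto simp: zi_def indicator_def split: if_splits)
          then show False using nz by simp
        qed
        then have "\<not> (\<forall>y\<in>elts ?E0. AE w in M. zi w * y w = 0)"
          using max_widthD[OF mw0 zim] by blast
        then obtain y0 where y0: "y0 \<in> elts ?E0" and y0z: "\<not> (AE w in M. zi w * y0 w = 0)" by blast
        define Yn where "Yn n = (\<lambda>w. min \<bar>x w\<bar> (real n * \<bar>y0 w\<bar>))" for n
        have Ynm: "Yn n \<in> borel_measurable M" for n unfolding Yn_def using xm E0m[OF y0] by measurable
        have YnE: "Yn n \<in> elts ?E0" for n
        proof -
          have "AE w in M. \<bar>Yn n w\<bar> \<le> \<bar>real n * y0 w\<bar>"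
            by (intro AE_I2) (auto simp: Yn_def abs_mult)
          then show ?thesis using solidD[OF S0 nidealD(4)[OF N0 y0] Ynm] by blast
        qed
        have "\<forall>n. AE w in M. z w \<le> \<bar>x w\<bar> - Yn n w"
        proof
          fix n
          have "(\<lambda>w. \<bar>x w\<bar> - Yn n w) \<in> D" by (rule Dmem[OF YnE]) (auto simp: Yn_def)
          from bspec[OF H this] show "AE w in M. z w \<le> \<bar>x w\<bar> - Yn n w" by simp
        qed
        then have "AE w in M. \<forall>n. z w \<le> \<bar>x w\<bar> - Yn n w" by (simp add: AE_all_countable)
        then have "AE w in M. zi w * y0 w = 0"
        proof eventually_elim
          case (elim w)
          show ?case
          proof (cases "0 < z w \<and> y0 w \<noteq> 0")
            case True
            then have pos: "0 < \<bar>y0 w\<bar>" by simp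
            obtain n where n: "\<bar>x w\<bar> / \<bar>y0 w\<bar> < real n" using reals_Archimedean2 by blast
            then have "\<bar>x w\<bar> < real n * \<bar>y0 w\<bar>" using pos by (simp add: divide_less_eq)
            then have "Yn n w = \<bar>x w\<bar>" by (simp add: Yn_def)
            then show ?thesis using elim[rule_format, of n] True by simp
          next
            case False
            then show ?thesis by (auto simp: zi_def indicator_def)
          qed
        qed
        then show False using y0z by simp
      qed
    qed
  qed
  have "\<forall>n. \<exists>y. y \<in> elts ?E0 \<and> (\<forall>w. 0 \<le> y w \<and> y w \<le> \<bar>x w\<bar>) \<and> nrm ?G (\<lambda>w. \<bar>x w\<bar> - y w) < 1 / real (Suc n)"
  proof
    fix n
    have "(0::real) < 1 / real (Suc n)" by simp
    from approx[OF this] obtain d where d: "d \<in> D" "nrm ?G d < 1 / real (Suc n)" by blast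
    from d(1) obtain yy where yy: "d = (\<lambda>w. \<bar>x w\<bar> - yy w)" "yy \<in> elts ?E0" "\<forall>w. 0 \<le> yy w \<and> yy w \<le> \<bar>x w\<bar>"
      unfolding D_def by blast
    have "nrm ?G (\<lambda>w. \<bar>x w\<bar> - yy w) < 1 / real (Suc n)" using d(2) unfolding yy(1) .
    then show "\<exists>y. y \<in> elts ?E0 \<and> (\<forall>w. 0 \<le> y w \<and> y w \<le> \<bar>x w\<bar>) \<and> nrm ?G (\<lambda>w. \<bar>x w\<bar> - y w) < 1 / real (Suc n)"
      using yy(2,3) by blast
  qed
  from choice[OF this] obtain Y where Y: "\<forall>n. Y n \<in> elts ?E0 \<and> (\<forall>w. 0 \<le> Y n w \<and> Y n w \<le> \<bar>x w\<bar>) \<and>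
      nrm ?G (\<lambda>w. \<bar>x w\<bar> - Y n w) < 1 / real (Suc n)" by blast
  then have YE: "\<And>n. Y n \<in> elts ?E0" and Yb: "\<And>n w. 0 \<le> Y n w \<and> Y n w \<le> \<bar>x w\<bar>"
    and Yn: "\<And>n. nrm ?G (\<lambda>w. \<bar>x w\<bar> - Y n w) < 1 / real (Suc n)" by auto
  define Z where "Z = runmax Y"
  have ZE: "Z n \<in> elts ?E0" for n unfolding Z_def by (rule runmax_mem[OF N0 YE]) (use Yb in auto)
  have Zb: "0 \<le> Z n w \<and> Z n w \<le> \<bar>x w\<bar>" for n w unfolding Z_def by (rule runmax_bounds[OF Yb])
  have YZ: "Y n w \<le> Z n w" for n w unfolding Z_def by (rule runmax_ge)
  have Zmono: "n \<le> m \<Longrightarrow> Z n w \<le> Z m w" for n m w unfolding Z_def by (rule runmax_mono)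
  have Zm: "Z n \<in> borel_measurable M" for n using E0m[OF ZE] .
  define a where "a n = (\<lambda>w. \<bar>x w\<bar> - Z n w)" for n
  have am: "a n \<in> borel_measurable M" for n unfolding a_def using axm Zm by measurable
  have aG: "a n \<in> elts ?G \<and> nrm ?G (a n) < 1 / real (Suc n)" for n
  proof -
    have dm: "(\<lambda>w. \<bar>x w\<bar> - Y n w) \<in> borel_measurable M" using axm E0m[OF YE] by measurable
    have "AE w in M. \<bar>\<bar>x w\<bar> - Y n w\<bar> \<le> \<bar>x w\<bar>" using Yb by (intro AE_I2) auto
    then have dG: "(\<lambda>w. \<bar>x w\<bar> - Y n w) \<in> elts ?G" using solidD[OF SG xG dm] by blast
    have "\<bar>a n w\<bar> \<le> \<bar>\<bar>x w\<bar> - Y n w\<bar>" for w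
      using Zb[of n w] YZ[of n w] Yb[of n w] by (auto simp: a_def)
    then have "AE w in M. \<bar>a n w\<bar> \<le> \<bar>\<bar>x w\<bar> - Y n w\<bar>" by (intro AE_I2) auto
    then have "a n \<in> elts ?G \<and> nrm ?G (a n) \<le> nrm ?G (\<lambda>w. \<bar>x w\<bar> - Y n w)"
      using solidD[OF SG dG am] by blast
    then show ?thesis using Yn[of n] by auto
  qed
  have ann: "0 \<le> a n w" for n w using Zb by (simp add: a_def)
  have diffE0: "(\<lambda>w. Z m w - Z n w) \<in> elts ?E0" for m n
    using nidealD(3)[OF N0 ZE[of m] nidealD(4)[OF N0 ZE[of n], of "-1"]] by simp
  have cb: "nrm E (\<lambda>w. Z m w - Z n w) < 1 / real (Suc n) + 1 / real (Suc m)" for m n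
  proof -
    have "nrm E (\<lambda>w. Z m w - Z n w) \<le> nrm ?G (\<lambda>w. Z m w - Z n w)" by (rule norming[OF adm J0 diffE0])
    also have "\<dots> \<le> nrm ?G (\<lambda>w. a n w + a m w)"
    proof -
      have s: "(\<lambda>w. a n w + a m w) \<in> elts ?G" using dual_add(1)[OF N1] aG by blast
      have dm: "(\<lambda>w. Z m w - Z n w) \<in> borel_measurable M" using Zm by measurable
      have "\<bar>Z m w - Z n w\<bar> \<le> \<bar>a n w + a m w\<bar>" for w
        using Zb[of n w] Zb[of m w] by (auto simp: a_def abs_if)
      then have "AE w in M. \<bar>Z m w - Z n w\<bar> \<le> \<bar>a n w + a m w\<bar>" by (intro AE_I2) auto
      then show ?thesis using solidD[OF SG s dm] by blast
    qed
    also have "\<dots> \<le> nrm ?G (a n) + nrm ?G (a m)" using dual_add(2)[OF N1] aG by blast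
    also have "\<dots> < 1 / real (Suc n) + 1 / real (Suc m)" using aG[of n] aG[of m] by simp
    finally show ?thesis .
  qed
  have cauchy: "\<forall>e>0. \<exists>N. \<forall>m\<ge>N. \<forall>n\<ge>N. nrm E (\<lambda>w. Z m w - Z n w) < e"
  proof (intro allI impI)
    fix e :: real assume e: "0 < e"
    then have "0 < e / 2" by simp
    from reals_Archimedean[OF this] obtain N where N: "inverse (real (Suc N)) < e / 2" by blast
    have "nrm E (\<lambda>w. Z m w - Z n w) < e" if "m \<ge> N" "n \<ge> N" for m n
    proof -
      have "1 / real (Suc n) \<le> 1 / real (Suc N)" "1 / real (Suc m) \<le> 1 / real (Suc N)"
        using that by (auto intro!: divide_left_mono)
      moreover have "1 / real (Suc N) < e / 2" using N by (simp add: inverse_eq_divide)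
      ultimately show ?thesis using cb[of m n] by linarith
    qed
    then show "\<exists>N. \<forall>m\<ge>N. \<forall>n\<ge>N. nrm E (\<lambda>w. Z m w - Z n w) < e" by blast
  qed
  obtain zz where zz: "zz \<in> elts E" and lim: "(\<lambda>n. nrm E (\<lambda>w. Z n w - zz w)) \<longlonglongrightarrow> 0"
    using BIS_complete[OF B E0E[OF ZE] cauchy] by blast
  have zzm: "zz \<in> borel_measurable M" using nidealD(1)[OF NE] zz by auto
  have tE: "(\<lambda>w. Z n w - zz w) \<in> elts E" for n
    using nidealD(3)[OF NE E0E[OF ZE[of n]] nidealD(4)[OF NE zz, of "-1"]] by simp
  have Zzz: "AE w in M. Z n w \<le> zz w" for n
  proof -
    have qm: "(\<lambda>w. max (Z n w - zz w) 0) \<in> borel_measurable M" using Zm zzm by measurable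
    have "AE w in M. max (Z n w - zz w) 0 = 0"
    proof -
      have qE: "(\<lambda>w. max (Z n w - zz w) 0) \<in> elts E"
        using solidD[OF SE tE[of n] qm] by (auto intro!: AE_I2 simp: max_def)
      have qn: "nrm E (\<lambda>w. max (Z n w - zz w) 0) \<le> nrm E (\<lambda>w. Z m w - zz w)" if "m \<ge> n" for m
      proof -
        have "\<bar>max (Z n w - zz w) 0\<bar> \<le> \<bar>Z m w - zz w\<bar>" for w
          using Zmono[OF that, of w] by (auto simp: max_def)
        then have "AE w in M. \<bar>max (Z n w - zz w) 0\<bar> \<le> \<bar>Z m w - zz w\<bar>" by (intro AE_I2) auto
        then show ?thesis using solidD[OF SE tE qm] by blast
      qed
      have "nrm E (\<lambda>w. max (Z n w - zz w) 0) \<le> 0" by (rule LIMSEQ_le_const[OF lim]) (use qn in blast)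
      then have "nrm E (\<lambda>w. max (Z n w - zz w) 0) = 0" using nidealD(5)[OF NE qE] by simp
      then show ?thesis using BIS_facts(1)[OF B qE] by simp
    qed
    then show ?thesis by eventually_elim (auto simp: max_def split: if_splits)
  qed
  define b where "b = (\<lambda>w. max (\<bar>x w\<bar> - zz w) 0)"
  have bm: "b \<in> borel_measurable M" unfolding b_def using axm zzm by measurable
  have bG: "b \<in> elts ?G \<and> nrm ?G b < 1 / real (Suc n)" for n
  proof -
    have "AE w in M. \<bar>b w\<bar> \<le> \<bar>a n w\<bar>"
      using Zzz[of n]
    proof eventually_elim
      case (elim w)
      then show ?case using Zb[of n w] by (auto simp: b_def a_def max_def)
    qed
    then have "b \<in> elts ?G \<and> nrm ?G b \<le> nrm ?G (a n)" using solidD[OF SG _ bm] aG by blast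
    then show ?thesis using aG[of n] by auto
  qed
  have "nrm ?G b \<le> 0" by (rule small_le_zero') (use bG in \<open>auto intro: less_imp_le\<close>)
  moreover have "0 \<le> nrm ?G b" using nidealD(5)[OF NG] bG[of 0] by blast
  ultimately have "nrm ?G b = 0" by simp
  then have "AE w in M. b w = 0" using Gzero[OF J0] bG by blast
  then have xle: "AE w in M. \<bar>x w\<bar> \<le> \<bar>zz w\<bar>" by eventually_elim (auto simp: b_def max_def split: if_splits)
  have xE: "x \<in> elts E" and nxz: "nrm E x \<le> nrm E zz" using solidD[OF SE zz xm xle] by auto
  have "nrm E zz - nrm ?G x \<le> nrm E (\<lambda>w. Z n w - zz w)" for n
  proof -
    have e1: "(\<lambda>w. Z n w + (-1) * (Z n w - zz w)) = zz" by auto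
    have "nrm E zz \<le> nrm E (Z n) + nrm E (\<lambda>w. (-1) * (Z n w - zz w))"
      using BIS_facts(2)[OF B E0E[OF ZE[of n]] nidealD(4)[OF NE tE[of n], of "-1"]] unfolding e1 .
    also have "nrm E (\<lambda>w. (-1) * (Z n w - zz w)) = nrm E (\<lambda>w. Z n w - zz w)"
      using nidealD(6)[OF NE tE[of n], of "-1"] by simp
    also have "nrm E (Z n) \<le> nrm ?G (Z n)" by (rule norming[OF adm J0 ZE])
    also have "nrm ?G (Z n) \<le> nrm ?G x"
    proof -
      have "AE w in M. \<bar>Z n w\<bar> \<le> \<bar>x w\<bar>" using Zb by (intro AE_I2) auto
      then show ?thesis using solidD[OF SG xG Zm] by blast
    qed
    finally show ?thesis by simp
  qed
  note est = this
  have "nrm E zz - nrm ?G x \<le> 0" by (rule LIMSEQ_le_const[OF lim]) (use est in blast)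
  then show ?thesis using xE nxz by simp
qed

lemma part3:
  assumes adm: "admissible M" and J0: "J0 M E"
  shows "subset1 (ocpart M (dual M (dual M (ocpart M E)))) E"
  unfolding subset1_def
proof (intro conjI subsetI ballI)
  fix x assume x: "x \<in> elts (ocpart M (dual M (dual M (ocpart M E))))"
  show "x \<in> elts E" using part3_main[OF adm J0 x] by (rule conjunct1)
  have "nrm (ocpart M (dual M (dual M (ocpart M E)))) x = nrm (dual M (dual M (ocpart M E))) x"
    by (simp add: ocpart_def)
  then show "nrm E x \<le> nrm (ocpart M (dual M (dual M (ocpart M E)))) x"
    using part3_main[OF adm J0 x] by simp
qed

theorem theorem9:
  fixes M :: "'a measure" and E F :: "'a ispace"
  assumes "admissible M" and "J0 M E" and "J0 M F"
  shows "(subset1 E F \<longrightarrow> subset1 (dual M (ocpart M F)) (dual M (ocpart M E)))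
       \<and> (subset1 F E \<longrightarrow> subset1 (ocpart M (dual M E)) (ocpart M (dual M F)))
       \<and> subset1 (ocpart M (dual M (dual M (ocpart M E)))) E
       \<and> subset1 F (dual M (ocpart M (dual M F)))"
proof (intro conjI impI)
  have BE: "BIS M E" using assms(2) by (simp add: J0_def)
  have BF: "BIS M F" using assms(3) by (simp add: J0_def)
  have NE: "nideal M E" by (rule BIS_nideal[OF BE])
  have NF: "nideal M F" by (rule BIS_nideal[OF BF])
  have N0E: "nideal M (ocpart M E)" by (rule J0_ocpart_nideal[OF assms(2)])
  have N0F: "nideal M (ocpart M F)" by (rule J0_ocpart_nideal[OF assms(3)])
  show "subset1 (dual M (ocpart M F)) (dual M (ocpart M E))" if EF: "subset1 E F"
  proof -
    have "subset1 (ocpart M E) (ocpart M F)" by (rule ocpart_mono[OF BIS_solid[OF BE] EF])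
    then show ?thesis
      by (rule dual_antitone[OF _ nidealD(2)[OF N0E]]) (simp add: nideal_zero[OF N0E])
  qed
  show "subset1 (ocpart M (dual M E)) (ocpart M (dual M F))" if FE: "subset1 F E"
  proof -
    have "subset1 (dual M E) (dual M F)"
      by (rule dual_antitone[OF FE nidealD(2)[OF NF]]) (simp add: nideal_zero[OF NF])
    then show ?thesis by (rule ocpart_mono[OF dual_solid[OF NE]])
  qed
  show "subset1 (ocpart M (dual M (dual M (ocpart M E)))) E" by (rule part3[OF assms(1,2)])
  show "subset1 F (dual M (ocpart M (dual M F)))"
  proof -
    have s1: "subset1 F (dual M (dual M F))" by (rule into_bidual[OF NF])
    have s2: "subset1 (ocpart M (dual M F)) (dual M F)" by (auto simp: subset1_def ocpart_def)
    have "foundation M (ocpart M (dual M F)) (dual M F)" using assms(3) by (simp add: J0_def)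
    then have z: "(\<lambda>_. 0) \<in> elts (ocpart M (dual M F))" by (simp add: foundation_def linear_sub_def)
    have z2: "nrm (ocpart M (dual M F)) (\<lambda>_. 0) \<le> 1" using dual_zero(2)[OF NF] by (simp add: ocpart_def)
    have "subset1 (dual M (dual M F)) (dual M (ocpart M (dual M F)))" by (rule dual_antitone[OF s2 z z2])
    then show ?thesis by (rule subset1_trans[OF s1])
  qed
qed

end
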